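(* Let $n\in\mathbb N$ and let $\beta,\gamma$ be compositions of $n$. Then $$\sum_{\alpha}|\mathrm{CONS}(\alpha,\beta)|\,(-1)^{|S_\gamma\setminus S_\alpha|}=\begin{cases} n! & \text{if } \beta\le\gamma,\\ 0&\text{otherwise,}\end{cases}$$ where the sum ranges over all compositions $\alpha$ of $n$ such that $\alpha\le\beta$ and $S_\gamma$ is $\alpha$-unimodal.
   Context: A composition $\alpha=(\alpha_1,\dots,\alpha_\ell)$ of $n$ is a sequence of positive integers summing to $n$; $\ell(\alpha)=\ell$. Set $S_\alpha=\{\alpha_1,\alpha_1+\alpha_2,\dots,\alpha_1+\dots+\alpha_{\ell-1}\}\subseteq[n-1]$. Blocks: $B_i(\alpha)=\{\alpha_1+\dots+\alpha_{i-1}+1,\dots,\alpha_1+\dots+\alpha_i\}$. For compositions $\alpha,\beta$ of $n$, $\alpha\le\beta$ means $S_\beta\subseteq S_\alpha$ (i.e. $\beta$ is obtained by adding contiguous parts of $\alpha$). A set $S\subseteq[n-1]$ is $\alpha$-unimodal if for every $i$ the set $S\cap(B_i(\alpha)\setminus S_\alpha)$ is an initial segment (in increasing order) of $B_i(\alpha)\setminus S_\alpha$. For $\alpha\le\beta$ and $\sigma\in\mathfrak S_n$ (one-line notation), let $\sigma^{(i)}=\sigma_a\cdots\sigma_b$ where $B_i(\alpha)=[a,b]$. The permutation $\sigma$ is consistent with $\alpha\le\beta$ if (i) for each $i\in[\ell(\alpha)]$ the maximum of $\sigma^{(i)}$ is its last letter, and (ii) for each $k\in[\ell(\beta)]$,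 if $B_k(\beta)=\bigcup_{r=i}^jB_r(\alpha)$, then the maxima of $\sigma^{(i)},\dots,\sigma^{(j)}$ are increasing. $\mathrm{CONS}(\alpha,\beta)$ is the set of such permutations. *)

theory Defs
  imports "HOL-Combinatorics.Permutations"
begin

definition is_comp :: "nat \<Rightarrow> nat list \<Rightarrow> bool" where
  "is_comp n \<alpha> \<longleftrightarrow> (\<forall>a\<in>set \<alpha>. 0 < a) \<and> sum_list \<alpha> = n"

definition Sset :: "nat list \<Rightarrow> nat set" where
  "Sset \<alpha> = {sum_list (take i \<alpha>) | i. 1 \<le> i \<and> i < length \<alpha>}"

definition block :: "nat list \<Rightarrow> nat \<Rightarrow> nat set" where
  "block \<alpha> i = {sum_list (take (i - 1) \<alpha>) + 1 .. sum_list (take i \<alpha>)}"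

definition comp_le :: "nat list \<Rightarrow> nat list \<Rightarrow> bool" where
  "comp_le \<alpha> \<beta> \<longleftrightarrow> Sset \<beta> \<subseteq> Sset \<alpha>"

definition unimodal :: "nat list \<Rightarrow> nat set \<Rightarrow> bool" where
  "unimodal \<alpha> S \<longleftrightarrow>
     (\<forall>i\<in>{1..length \<alpha>}.
        \<forall>x \<in> S \<inter> (block \<alpha> i - Sset \<alpha>). \<forall>y \<in> block \<alpha> i - Sset \<alpha>. y < x \<longrightarrow> y \<in> S)"

definition CONS :: "nat \<Rightarrow> nat list \<Rightarrow> nat list \<Rightarrow> (nat \<Rightarrow> nat) set" where
  "CONS n \<alpha> \<beta> = {\<sigma>. \<sigma> permutes {1..n} \<and>
     (\<forall>i\<in>{1..length \<alpha>}. \<sigma> (sum_list (take i \<alpha>)) = Max (\<sigma> ` block \<alpha> i)) \<and>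
     (\<forall>k\<in>{1..length \<beta>}. \<forall>r\<in>{1..length \<alpha>}. \<forall>r'\<in>{1..length \<alpha>}.
        r < r' \<and> block \<alpha> r \<subseteq> block \<beta> k \<and> block \<alpha> r' \<subseteq> block \<beta> k \<longrightarrow>
        Max (\<sigma> ` block \<alpha> r) < Max (\<sigma> ` block \<alpha> r'))}"

end

theory Submission
  imports Defs "HOL-Combinatorics.Multiset_Permutations"
begin

definition uni :: "nat set \<Rightarrow> nat set \<Rightarrow> bool" where
 "uni A G \<longleftrightarrow> (\<forall>x\<in>G-A. \<forall>y. 1 \<le> y \<and> y < x \<and> (\<forall>a\<in>A. \<not>(y \<le> a \<and> a < x)) \<longrightarrow> y \<in> G)"
definition clean :: "nat \<Rightarrow> nat set \<Rightarrow> nat set \<Rightarrow> bool" where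
 "clean n A G \<longleftrightarrow> (\<forall>y. 1 \<le> y \<and> y < n \<and> (\<forall>a\<in>A. \<not>(y \<le> a \<and> a < n)) \<longrightarrow> y \<in> G)"
definition Wt :: "nat \<Rightarrow> nat set \<Rightarrow> nat" where "Wt n A = \<Prod>({1..<n} - A)"
definition FF :: "nat \<Rightarrow> nat set \<Rightarrow> int" where
 "FF n G = (\<Sum>A\<in>{A. A \<subseteq> {1..<n} \<and> uni A G}. int (Wt n A) * (-1)^card(G - A))"
definition FS :: "nat \<Rightarrow> nat set \<Rightarrow> int" where
 "FS n G = (\<Sum>A\<in>{A. A \<subseteq> {1..<n} \<and> uni A G \<and> clean n A G}. int (Wt n A) * (-1)^card(G - A))"

lemma sum_pow_split:
  assumes "n \<notin> S" "finite S"
  shows "(\<Sum>A\<in>{A. A \<subseteq> insert n S \<and> P A}. f A) =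
         (\<Sum>A\<in>{A. A \<subseteq> S \<and> P A}. f A) + (\<Sum>A\<in>{A. A \<subseteq> S \<and> P (insert n A)}. f (insert n A))"
proof -
  have eq: "{A. A \<subseteq> insert n S \<and> P A} = {A. A \<subseteq> S \<and> P A} \<union> insert n ` {A. A \<subseteq> S \<and> P (insert n A)}"
  proof (rule set_eqI, rule iffI)
    fix A assume "A \<in> {A. A \<subseteq> insert n S \<and> P A}"
    then show "A \<in> {A. A \<subseteq> S \<and> P A} \<union> insert n ` {A. A \<subseteq> S \<and> P (insert n A)}"
    proof (cases "n \<in> A")
      case True
      with \<open>A \<in> _\<close> have "A - {n} \<in> {A. A \<subseteq> S \<and> P (insert n A)}" by (auto simp: insert_absorb)
      moreover have "A = insert n (A - {n})" using True by auto
      ultimately show ?thesis by blast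
    qed auto
  qed auto
  have fin: "finite {A. A \<subseteq> S \<and> P (insert n A)}" "finite {A. A \<subseteq> S \<and> P A}" using assms by auto
  have disj: "{A. A \<subseteq> S \<and> P A} \<inter> insert n ` {A. A \<subseteq> S \<and> P (insert n A)} = {}" using assms by auto
  have inj: "inj_on (insert n) {A. A \<subseteq> S \<and> P (insert n A)}"
    unfolding inj_on_def using assms by (metis Diff_insert_absorb mem_Collect_eq subset_iff)
  show ?thesis unfolding eq
    by (subst sum.union_disjoint) (use fin disj inj in \<open>auto simp: sum.reindex\<close>)
qed

lemma uni_ins:
  assumes "A \<subseteq> {1..<n}" "G \<subseteq> {1..n}"
  shows "uni (insert n A) G \<longleftrightarrow> uni A (G - {n})"
proof
  assume u: "uni (insert n A) G"
  show "uni A (G - {n})" unfolding uni_def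
  proof (intro ballI allI impI)
    fix x y assume x: "x \<in> G - {n} - A" and y: "1 \<le> y \<and> y < x \<and> (\<forall>a\<in>A. \<not> (y \<le> a \<and> a < x))"
    have "x \<le> n" "x \<noteq> n" using x assms by auto
    hence "x < n" by simp
    hence "\<forall>a\<in>insert n A. \<not> (y \<le> a \<and> a < x)" using y by auto
    moreover have "x \<in> G - insert n A" using x by auto
    ultimately have "y \<in> G" using u y unfolding uni_def by blast
    thus "y \<in> G - {n}" using y \<open>x < n\<close> by auto
  qed
next
  assume u: "uni A (G - {n})"
  show "uni (insert n A) G" unfolding uni_def
  proof (intro ballI allI impI)
    fix x y assume x: "x \<in> G - insert n A" and y: "1 \<le> y \<and> y < x \<and> (\<forall>a\<in>insert n A. \<not> (y \<le> a \<and> a < x))"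
    have "x \<in> G - {n} - A" using x by auto
    moreover have "\<forall>a\<in>A. \<not> (y \<le> a \<and> a < x)" using y by auto
    ultimately have "y \<in> G - {n}" using u y unfolding uni_def by blast
    thus "y \<in> G" by auto
  qed
qed

lemma uni_notin:
  assumes "A \<subseteq> {1..<n}" "G \<subseteq> {1..n}"
  shows "uni A G \<longleftrightarrow> uni A (G - {n}) \<and> (n \<in> G \<longrightarrow> clean n A (G - {n}))"
proof
  assume u: "uni A G"
  have nA: "n \<notin> A" using assms by auto
  show "uni A (G - {n}) \<and> (n \<in> G \<longrightarrow> clean n A (G - {n}))"
  proof
    show "uni A (G - {n})" unfolding uni_def
    proof (intro ballI allI impI)
      fix x y assume x: "x \<in> G - {n} - A" and y: "1 \<le> y \<and> y < x \<and> (\<forall>a\<in>A. \<not> (y \<le> a \<and> a < x))"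
      have "x < n" using x assms by fastforce
      have "y \<in> G" using u x y unfolding uni_def by blast
      thus "y \<in> G - {n}" using y \<open>x < n\<close> by auto
    qed
    show "n \<in> G \<longrightarrow> clean n A (G - {n})" unfolding clean_def
    proof (intro impI allI)
      fix y assume nG: "n \<in> G" and y: "1 \<le> y \<and> y < n \<and> (\<forall>a\<in>A. \<not> (y \<le> a \<and> a < n))"
      have "n \<in> G - A" using nG nA by auto
      hence "y \<in> G" using u y unfolding uni_def by blast
      thus "y \<in> G - {n}" using y by auto
    qed
  qed
next
  assume u: "uni A (G - {n}) \<and> (n \<in> G \<longrightarrow> clean n A (G - {n}))"
  show "uni A G" unfolding uni_def
  proof (intro ballI allI impI)
    fix x y assume x: "x \<in> G - A" and y: "1 \<le> y \<and> y < x \<and> (\<forall>a\<in>A. \<not> (y \<le> a \<and> a < x))"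
    show "y \<in> G"
    proof (cases "x = n")
      case True
      then show ?thesis using u x y unfolding clean_def by blast
    next
      case False
      then have "x \<in> G - {n} - A" using x by auto
      then show ?thesis using u y unfolding uni_def by blast
    qed
  qed
qed

lemma clean_ins:
  assumes "A \<subseteq> {1..<n}"
  shows "clean (Suc n) (insert n A) G"
  unfolding clean_def by auto

lemma clean_notin:
  assumes "A \<subseteq> {1..<n}" "G \<subseteq> {1..n}" "1 \<le> n"
  shows "clean (Suc n) A G \<longleftrightarrow> n \<in> G \<and> clean n A (G - {n})"
proof
  assume c: "clean (Suc n) A G"
  have nA: "n \<notin> A" using assms by auto
  have "\<forall>a\<in>A. \<not> (n \<le> a \<and> a < Suc n)" using nA le_less_Suc_eq by blast
  then have "n \<in> G" using c assms(3) unfolding clean_def by blast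
  moreover have "clean n A (G - {n})" unfolding clean_def
  proof (intro allI impI)
    fix y assume y: "1 \<le> y \<and> y < n \<and> (\<forall>a\<in>A. \<not> (y \<le> a \<and> a < n))"
    have "\<forall>a\<in>A. \<not> (y \<le> a \<and> a < Suc n)" using y nA by (metis less_SucE)
    hence "y \<in> G" using c y unfolding clean_def by auto
    thus "y \<in> G - {n}" using y by auto
  qed
  ultimately show "n \<in> G \<and> clean n A (G - {n})" by blast
next
  assume c: "n \<in> G \<and> clean n A (G - {n})"
  show "clean (Suc n) A G" unfolding clean_def
  proof (intro allI impI)
    fix y assume y: "1 \<le> y \<and> y < Suc n \<and> (\<forall>a\<in>A. \<not> (y \<le> a \<and> a < Suc n))"
    show "y \<in> G"
    proof (cases "y = n")
      case True then show ?thesis using c by simp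
    next
      case False
      then have "y < n" using y by simp
      moreover have "\<forall>a\<in>A. \<not> (y \<le> a \<and> a < n)" using y by auto
      ultimately show ?thesis using c y unfolding clean_def by auto
    qed
  qed
qed

lemma Wt_ins: "A \<subseteq> {1..<n} \<Longrightarrow> Wt (Suc n) (insert n A) = Wt n A"
  unfolding Wt_def by (rule arg_cong[where f=Prod]) auto

lemma Wt_notin: "A \<subseteq> {1..<n} \<Longrightarrow> 1 \<le> n \<Longrightarrow> Wt (Suc n) A = n * Wt n A"
proof -
  assume a: "A \<subseteq> {1..<n}" "1 \<le> n"
  have "{1..<Suc n} - A = insert n ({1..<n} - A)" using a by auto
  thus ?thesis unfolding Wt_def by simp
qed

lemma card_ins: "finite G \<Longrightarrow> card (G - insert n A) = card ((G - {n}) - A)"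
  by (metis Diff_insert2)

lemma card_notin: "finite G \<Longrightarrow> n \<notin> A \<Longrightarrow> card (G - A) = card ((G - {n}) - A) + (if n \<in> G then 1 else 0)"
proof -
  assume f: "finite G" and n: "n \<notin> A"
  show ?thesis
  proof (cases "n \<in> G")
    case True
    have "G - A = insert n ((G - {n}) - A)" using True n by auto
    moreover have "n \<notin> (G - {n}) - A" by auto
    ultimately show ?thesis using f True by simp
  next
    case False then show ?thesis by simp
  qed
qed

lemma FF_rec:
  assumes "1 \<le> n" "G \<subseteq> {1..n}"
  shows "FF (Suc n) G = FF n (G - {n}) + (if n \<in> G then - int n * FS n (G - {n}) else int n * FF n (G - {n}))"
proof -
  have fG: "finite G" using assms finite_subset by blast
  have iv: "{1..<Suc n} = insert n {1..<n}" using assms by auto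
  have "FF (Suc n) G = (\<Sum>A\<in>{A. A \<subseteq> {1..<n} \<and> uni A G}. int (Wt (Suc n) A) * (-1)^card(G - A))
     + (\<Sum>A\<in>{A. A \<subseteq> {1..<n} \<and> uni (insert n A) G}. int (Wt (Suc n) (insert n A)) * (-1)^card(G - insert n A))"
    unfolding FF_def iv by (rule sum_pow_split) auto
  also have "(\<Sum>A\<in>{A. A \<subseteq> {1..<n} \<and> uni (insert n A) G}. int (Wt (Suc n) (insert n A)) * (-1)^card(G - insert n A))
     = FF n (G - {n})" unfolding FF_def
    by (rule sum.cong) (use assms fG in \<open>auto simp: uni_ins Wt_ins card_ins\<close>)
  also have "(\<Sum>A\<in>{A. A \<subseteq> {1..<n} \<and> uni A G}. int (Wt (Suc n) A) * (-1)^card(G - A))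
     = (if n \<in> G then - int n * FS n (G - {n}) else int n * FF n (G - {n}))"
  proof (cases "n \<in> G")
    case True
    have "(\<Sum>A\<in>{A. A \<subseteq> {1..<n} \<and> uni A G}. int (Wt (Suc n) A) * (-1)^card(G - A))
       = (\<Sum>A\<in>{A. A \<subseteq> {1..<n} \<and> uni A (G - {n}) \<and> clean n A (G - {n})}. - int n * (int (Wt n A) * (-1)^card((G - {n}) - A)))"
    proof (rule sum.cong)
      show "{A. A \<subseteq> {1..<n} \<and> uni A G} = {A. A \<subseteq> {1..<n} \<and> uni A (G - {n}) \<and> clean n A (G - {n})}"
        using uni_notin[OF _ assms(2)] True by auto
    next
      fix A assume "A \<in> {A. A \<subseteq> {1..<n} \<and> uni A (G - {n}) \<and> clean n A (G - {n})}"
      hence A: "A \<subseteq> {1..<n}" by auto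
      hence "n \<notin> A" by auto
      then show "int (Wt (Suc n) A) * (-1)^card(G - A) = - int n * (int (Wt n A) * (-1)^card((G - {n}) - A))"
        using Wt_notin[OF A assms(1)] card_notin[OF fG] True by simp
    qed
    also have "\<dots> = - int n * FS n (G - {n})" unfolding FS_def by (simp add: sum_distrib_left)
    finally show ?thesis using True by simp
  next
    case False
    have "(\<Sum>A\<in>{A. A \<subseteq> {1..<n} \<and> uni A G}. int (Wt (Suc n) A) * (-1)^card(G - A))
       = (\<Sum>A\<in>{A. A \<subseteq> {1..<n} \<and> uni A (G - {n})}. int n * (int (Wt n A) * (-1)^card((G - {n}) - A)))"
    proof (rule sum.cong)
      show "{A. A \<subseteq> {1..<n} \<and> uni A G} = {A. A \<subseteq> {1..<n} \<and> uni A (G - {n})}"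
        using False by simp
    next
      fix A assume "A \<in> {A. A \<subseteq> {1..<n} \<and> uni A (G - {n})}"
      hence A: "A \<subseteq> {1..<n}" by auto
      then show "int (Wt (Suc n) A) * (-1)^card(G - A) = int n * (int (Wt n A) * (-1)^card((G - {n}) - A))"
        using Wt_notin[OF A assms(1)] False by simp
    qed
    also have "\<dots> = int n * FF n (G - {n})" unfolding FF_def by (simp add: sum_distrib_left)
    finally show ?thesis using False by simp
  qed
  finally show ?thesis by simp
qed

lemma FS_rec:
  assumes "1 \<le> n" "G \<subseteq> {1..n}"
  shows "FS (Suc n) G = FF n (G - {n}) + (if n \<in> G then - int n * FS n (G - {n}) else 0)"
proof -
  have fG: "finite G" using assms finite_subset by blast
  have iv: "{1..<Suc n} = insert n {1..<n}" using assms by auto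
  have "FS (Suc n) G = (\<Sum>A\<in>{A. A \<subseteq> {1..<n} \<and> (uni A G \<and> clean (Suc n) A G)}. int (Wt (Suc n) A) * (-1)^card(G - A))
     + (\<Sum>A\<in>{A. A \<subseteq> {1..<n} \<and> (uni (insert n A) G \<and> clean (Suc n) (insert n A) G)}. int (Wt (Suc n) (insert n A)) * (-1)^card(G - insert n A))"
    unfolding FS_def iv by (rule sum_pow_split) auto
  also have "(\<Sum>A\<in>{A. A \<subseteq> {1..<n} \<and> (uni (insert n A) G \<and> clean (Suc n) (insert n A) G)}. int (Wt (Suc n) (insert n A)) * (-1)^card(G - insert n A))
     = FF n (G - {n})" unfolding FF_def
    by (rule sum.cong) (use assms fG in \<open>auto simp: uni_ins Wt_ins card_ins clean_ins\<close>)
  also have "(\<Sum>A\<in>{A. A \<subseteq> {1..<n} \<and> (uni A G \<and> clean (Suc n) A G)}. int (Wt (Suc n) A) * (-1)^card(G - A))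
     = (if n \<in> G then - int n * FS n (G - {n}) else 0)"
  proof (cases "n \<in> G")
    case True
    have "(\<Sum>A\<in>{A. A \<subseteq> {1..<n} \<and> (uni A G \<and> clean (Suc n) A G)}. int (Wt (Suc n) A) * (-1)^card(G - A))
       = (\<Sum>A\<in>{A. A \<subseteq> {1..<n} \<and> uni A (G - {n}) \<and> clean n A (G - {n})}. - int n * (int (Wt n A) * (-1)^card((G - {n}) - A)))"
    proof (rule sum.cong)
      show "{A. A \<subseteq> {1..<n} \<and> (uni A G \<and> clean (Suc n) A G)} = {A. A \<subseteq> {1..<n} \<and> uni A (G - {n}) \<and> clean n A (G - {n})}"
        using uni_notin[OF _ assms(2)] clean_notin[OF _ assms(2) assms(1)] True by auto
    next
      fix A assume "A \<in> {A. A \<subseteq> {1..<n} \<and> uni A (G - {n}) \<and> clean n A (G - {n})}"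
      hence A: "A \<subseteq> {1..<n}" by auto
      hence "n \<notin> A" by auto
      then show "int (Wt (Suc n) A) * (-1)^card(G - A) = - int n * (int (Wt n A) * (-1)^card((G - {n}) - A))"
        using Wt_notin[OF A assms(1)] card_notin[OF fG] True by simp
    qed
    also have "\<dots> = - int n * FS n (G - {n})" unfolding FS_def by (simp add: sum_distrib_left)
    finally show ?thesis using True by simp
  next
    case False
    have "{A. A \<subseteq> {1..<n} \<and> (uni A G \<and> clean (Suc n) A G)} = {}"
      using clean_notin[OF _ assms(2) assms(1)] False by auto
    then show ?thesis using False by (subst \<open>_ = {}\<close>) simp
  qed
  finally show ?thesis by simp
qed

lemma FF_base: "G \<subseteq> {1..<1} \<Longrightarrow> FF 1 G = 1 \<and> FS 1 G = 1"
proof -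
  assume "G \<subseteq> {1..<1}"
  hence G: "G = {}" by auto
  have e: "{A. A \<subseteq> {1..<1::nat} \<and> P A} = (if P {} then {{}} else {})" for P by auto
  have "uni {} {}" "clean 1 {} {}" unfolding uni_def clean_def by auto
  thus ?thesis unfolding FF_def FS_def e G by (simp add: Wt_def)
qed

lemma FF_main:
  assumes "1 \<le> n"
  shows "\<forall>G. G \<subseteq> {1..<n} \<longrightarrow> FF n G = (if G = {} then int (fact n) else 0) \<and> FS n G = (if G = {} then int (fact (n - 1)) else 0)"
  using assms
proof (induction n rule: dec_induct)
  case base
  show ?case
  proof (intro allI impI)
    fix G :: "nat set" assume G: "G \<subseteq> {1..<1}"
    hence "G = {}" by auto
    with FF_base[OF G] show "FF 1 G = (if G = {} then int (fact 1) else 0) \<and> FS 1 G = (if G = {} then int (fact (1 - 1)) else 0)" by simp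
  qed
next
  case (step n)
  show ?case
  proof (intro allI impI)
    fix G assume G: "G \<subseteq> {1..<Suc n}"
    hence G': "G \<subseteq> {1..n}" "G - {n} \<subseteq> {1..<n}" by auto
    note IH = step.IH[rule_format, OF G'(2)]
    note R1 = FF_rec[OF step.hyps(1) G'(1)]
    note R2 = FS_rec[OF step.hyps(1) G'(1)]
    show "FF (Suc n) G = (if G = {} then int (fact (Suc n)) else 0) \<and> FS (Suc n) G = (if G = {} then int (fact (Suc n - 1)) else 0)"
    proof (cases "G - {n} = {}")
      case True
      obtain k where k: "n = Suc k" using step.hyps by (cases n) auto
      have fn0: "(fact n :: nat) = n * fact (n - 1)" unfolding k by simp
      have fn: "int (fact n) = int n * int (fact (n - 1))" using fn0 by (metis of_nat_mult)
      have I1: "FF n (G - {n}) = int (fact n)" "FS n (G - {n}) = int (fact (n - 1))" using IH unfolding True by simp_all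
      show ?thesis
      proof (cases "n \<in> G")
        case True
        with \<open>G - {n} = {}\<close> have "G \<noteq> {}" by auto
        have "FF (Suc n) G = 0" using R1 True I1 fn by simp
        moreover have "FS (Suc n) G = 0" using R2 True I1 fn by simp
        ultimately show ?thesis using \<open>G \<noteq> {}\<close> by simp
      next
        case False
        with \<open>G - {n} = {}\<close> have "G = {}" by auto
        have "FF (Suc n) G = int (fact (Suc n))" using R1 False I1 by (simp add: algebra_simps)
        moreover have "FS (Suc n) G = int (fact n)" using R2 False I1 by simp
        ultimately show ?thesis using \<open>G = {}\<close> by simp
      qed
    next
      case False
      hence "G \<noteq> {}" by auto
      have I1: "FF n (G - {n}) = 0" "FS n (G - {n}) = 0" using IH False by auto
      have "FF (Suc n) G = 0" unfolding R1 I1 by simp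
      moreover have "FS (Suc n) G = 0" unfolding R2 I1 by simp
      ultimately show ?thesis using \<open>G \<noteq> {}\<close> by simp
    qed
  qed
qed

lemma perms_snoc:
  assumes "W \<noteq> {}"
  shows "{xs \<in> permutations_of_set W. P xs} =
     (\<Union>x\<in>W. (\<lambda>ys. ys @ [x]) ` {ys \<in> permutations_of_set (W - {x}). P (ys @ [x])})"
proof (rule set_eqI, rule iffI)
  fix xs assume xs: "xs \<in> {xs \<in> permutations_of_set W. P xs}"
  hence d: "set xs = W" "distinct xs" "P xs" by (auto simp: permutations_of_set_def)
  hence ne: "xs \<noteq> []" using assms by auto
  let ?x = "last xs" and ?ys = "butlast xs"
  have eq: "xs = ?ys @ [?x]" using ne by simp
  have "?x \<in> W" using d ne by auto
  moreover have "?ys \<in> {ys \<in> permutations_of_set (W - {?x}). P (ys @ [?x])}"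
  proof -
    have "distinct (?ys @ [?x])" using d eq by metis
    hence "distinct ?ys" "?x \<notin> set ?ys" by auto
    moreover have "set ?ys \<union> {?x} = W" using d eq by (metis empty_set list.simps(15) set_append)
    ultimately have "set ?ys = W - {?x}" by auto
    thus ?thesis using \<open>distinct ?ys\<close> d eq by (auto simp: permutations_of_set_def)
  qed
  ultimately show "xs \<in> (\<Union>x\<in>W. (\<lambda>ys. ys @ [x]) ` {ys \<in> permutations_of_set (W - {x}). P (ys @ [x])})"
    using eq by blast
next
  fix xs assume "xs \<in> (\<Union>x\<in>W. (\<lambda>ys. ys @ [x]) ` {ys \<in> permutations_of_set (W - {x}). P (ys @ [x])})"
  then obtain x ys where x: "x \<in> W" "xs = ys @ [x]" "ys \<in> permutations_of_set (W - {x})" "P (ys @ [x])" by blast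
  thus "xs \<in> {xs \<in> permutations_of_set W. P xs}" by (auto simp: permutations_of_set_def)
qed

lemma card_snoc:
  assumes "finite W" "W \<noteq> {}"
  shows "card {xs \<in> permutations_of_set W. P xs} =
     (\<Sum>x\<in>W. card {ys \<in> permutations_of_set (W - {x}). P (ys @ [x])})"
proof -
  have "card {xs \<in> permutations_of_set W. P xs} =
     card (\<Union>x\<in>W. (\<lambda>ys. ys @ [x]) ` {ys \<in> permutations_of_set (W - {x}). P (ys @ [x])})"
    using perms_snoc[OF assms(2)] by simp
  also have "\<dots> = (\<Sum>x\<in>W. card ((\<lambda>ys. ys @ [x]) ` {ys \<in> permutations_of_set (W - {x}). P (ys @ [x])}))"
    by (rule card_UN_disjoint) (use assms in auto)
  also have "\<dots> = (\<Sum>x\<in>W. card {ys \<in> permutations_of_set (W - {x}). P (ys @ [x])})"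
    by (rule sum.cong) (auto intro!: card_image inj_onI)
  finally show ?thesis .
qed

definition pm :: "nat list \<Rightarrow> nat \<Rightarrow> bool" where
  "pm xs p \<longleftrightarrow> (\<forall>j. 1 \<le> j \<and> j < p \<longrightarrow> xs ! (j - 1) < xs ! (p - 1))"

lemma pm_snoc: "p \<le> length ys \<Longrightarrow> pm (ys @ [x]) p \<longleftrightarrow> pm ys p"
proof -
  assume p: "p \<le> length ys"
  have "\<And>j. 1 \<le> j \<Longrightarrow> j < p \<Longrightarrow> (ys @ [x]) ! (j - 1) = ys ! (j - 1) \<and> (ys @ [x]) ! (p - 1) = ys ! (p - 1)"
  proof -
    fix j assume "1 \<le> j" "j < p"
    hence "j - 1 < length ys" "p - 1 < length ys" using p by arith+
    thus "(ys @ [x]) ! (j - 1) = ys ! (j - 1) \<and> (ys @ [x]) ! (p - 1) = ys ! (p - 1)" by (simp add: nth_append_left)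
  qed
  thus ?thesis unfolding pm_def by auto
qed

lemma pm_last: "pm (ys @ [x]) (Suc (length ys)) \<longleftrightarrow> (\<forall>y\<in>set ys. y < x)"
proof
  assume a: "pm (ys @ [x]) (Suc (length ys))"
  show "\<forall>y\<in>set ys. y < x"
  proof
    fix y assume "y \<in> set ys"
    then obtain i where i: "i < length ys" "ys ! i = y" by (auto simp: in_set_conv_nth)
    have "(ys @ [x]) ! (Suc i - 1) < (ys @ [x]) ! (Suc (length ys) - 1)" using a i unfolding pm_def by auto
    thus "y < x" using i by (simp add: nth_append)
  qed
next
  assume a: "\<forall>y\<in>set ys. y < x"
  show "pm (ys @ [x]) (Suc (length ys))" unfolding pm_def
  proof (intro allI impI)
    fix j assume j: "1 \<le> j \<and> j < Suc (length ys)"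
    hence "j - 1 < length ys" by arith
    hence "(ys @ [x]) ! (j - 1) = ys ! (j - 1)" by (simp add: nth_append_left)
    moreover have "ys ! (j - 1) \<in> set ys" using \<open>j - 1 < length ys\<close> by simp
    ultimately show "(ys @ [x]) ! (j - 1) < (ys @ [x]) ! (Suc (length ys) - 1)" using a by simp
  qed
qed

lemma count_pm:
  "\<forall>W T. finite W \<longrightarrow> card W = k \<longrightarrow> T \<subseteq> {1..k} \<longrightarrow>
     card {xs \<in> permutations_of_set W. \<forall>p\<in>T. pm xs p} = \<Prod>({1..k} - T)"
proof (induction k)
  case 0
  show ?case
  proof (intro allI impI)
    fix W :: "nat set" and T :: "nat set"
    assume "finite W" "card W = 0" "T \<subseteq> {1..0}"
    hence "W = {}" "T = {}" by auto
    thus "card {xs \<in> permutations_of_set W. \<forall>p\<in>T. pm xs p} = \<Prod>({1..0} - T)" by simp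
  qed
next
  case (Suc k)
  show ?case
  proof (intro allI impI)
    fix W :: "nat set" and T :: "nat set"
    assume W: "finite W" "card W = Suc k" and T: "T \<subseteq> {1..Suc k}"
    hence Wne: "W \<noteq> {}" by auto
    have cs: "card {xs \<in> permutations_of_set W. \<forall>p\<in>T. pm xs p} =
       (\<Sum>x\<in>W. card {ys \<in> permutations_of_set (W - {x}). \<forall>p\<in>T. pm (ys @ [x]) p})"
      by (rule card_snoc[OF W(1) Wne])
    have cW: "\<And>x. x \<in> W \<Longrightarrow> card (W - {x}) = k" using W by simp
    have len: "\<And>x ys. ys \<in> permutations_of_set (W - {x}) \<Longrightarrow> x \<in> W \<Longrightarrow> length ys = k"
      using cW length_finite_permutations_of_set by blast
    show "card {xs \<in> permutations_of_set W. \<forall>p\<in>T. pm xs p} = \<Prod>({1..Suc k} - T)"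
    proof (cases "Suc k \<in> T")
      case False
      hence T': "T \<subseteq> {1..k}" using T by (auto simp: le_Suc_eq)
      have "\<And>x. x \<in> W \<Longrightarrow> card {ys \<in> permutations_of_set (W - {x}). \<forall>p\<in>T. pm (ys @ [x]) p} = \<Prod>({1..k} - T)"
      proof -
        fix x assume x: "x \<in> W"
        have "{ys \<in> permutations_of_set (W - {x}). \<forall>p\<in>T. pm (ys @ [x]) p} = {ys \<in> permutations_of_set (W - {x}). \<forall>p\<in>T. pm ys p}"
          using len[OF _ x] T' pm_snoc by fastforce
        thus "card {ys \<in> permutations_of_set (W - {x}). \<forall>p\<in>T. pm (ys @ [x]) p} = \<Prod>({1..k} - T)"
          using Suc.IH W x T' cW by simp
      qed
      hence "card {xs \<in> permutations_of_set W. \<forall>p\<in>T. pm xs p} = Suc k * \<Prod>({1..k} - T)"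
        using cs W by simp
      moreover have "{1..Suc k} - T = insert (Suc k) ({1..k} - T)" using False by auto
      ultimately show ?thesis by simp
    next
      case True
      let ?m = "Max W"
      have mW: "?m \<in> W" using W Wne by simp
      have T': "T - {Suc k} \<subseteq> {1..k}" using T by (auto simp: le_Suc_eq)
      have zero: "\<And>x. x \<in> W - {?m} \<Longrightarrow> card {ys \<in> permutations_of_set (W - {x}). \<forall>p\<in>T. pm (ys @ [x]) p} = 0"
      proof -
        fix x assume x: "x \<in> W - {?m}"
        have "{ys \<in> permutations_of_set (W - {x}). \<forall>p\<in>T. pm (ys @ [x]) p} = {}"
        proof (rule ccontr)
          assume "\<not> ?thesis"
          then obtain ys where ys: "ys \<in> permutations_of_set (W - {x})" "\<forall>p\<in>T. pm (ys @ [x]) p" by blast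
          have "length ys = k" using len ys x by blast
          hence "pm (ys @ [x]) (Suc (length ys))" using ys True by simp
          hence "\<forall>y\<in>set ys. y < x" using pm_last by blast
          moreover have "?m \<in> set ys" using ys x mW by (auto simp: permutations_of_set_def)
          ultimately have "?m < x" by blast
          moreover have "x \<le> ?m" using x W by simp
          ultimately show False by simp
        qed
        thus "card {ys \<in> permutations_of_set (W - {x}). \<forall>p\<in>T. pm (ys @ [x]) p} = 0" by simp
      qed
      have "card {xs \<in> permutations_of_set W. \<forall>p\<in>T. pm xs p} =
          card {ys \<in> permutations_of_set (W - {?m}). \<forall>p\<in>T. pm (ys @ [?m]) p}"
        unfolding cs using W(1) mW zero by (subst sum.remove[of _ ?m]) auto
      also have "{ys \<in> permutations_of_set (W - {?m}). \<forall>p\<in>T. pm (ys @ [?m]) p} =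
          {ys \<in> permutations_of_set (W - {?m}). \<forall>p\<in>T - {Suc k}. pm ys p}"
      proof -
        have "\<And>ys. ys \<in> permutations_of_set (W - {?m}) \<Longrightarrow> (\<forall>p\<in>T. pm (ys @ [?m]) p) \<longleftrightarrow> (\<forall>p\<in>T - {Suc k}. pm ys p)"
        proof -
          fix ys assume ys: "ys \<in> permutations_of_set (W - {?m})"
          have l: "length ys = k" using len[OF ys mW] .
          have "pm (ys @ [?m]) (Suc k)"
          proof -
            have "\<forall>y\<in>set ys. y < ?m" using ys W by (auto simp: permutations_of_set_def order.strict_iff_order)
            thus ?thesis using pm_last l by metis
          qed
          moreover have "\<forall>p\<in>T - {Suc k}. pm (ys @ [?m]) p \<longleftrightarrow> pm ys p" using T' l pm_snoc by auto
          ultimately show "(\<forall>p\<in>T. pm (ys @ [?m]) p) \<longleftrightarrow> (\<forall>p\<in>T - {Suc k}. pm ys p)" by auto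
        qed
        thus ?thesis by auto
      qed
      also have "card \<dots> = \<Prod>({1..k} - (T - {Suc k}))" using Suc.IH W mW T' by simp
      also have "{1..k} - (T - {Suc k}) = {1..Suc k} - T" using True by (auto simp: le_Suc_eq)
      finally show ?thesis .
    qed
  qed
qed

definition cnd :: "nat list \<Rightarrow> nat set \<Rightarrow> nat \<Rightarrow> bool" where
  "cnd xs B p \<longleftrightarrow> (\<forall>j. 1 \<le> j \<and> j < p \<and> (\<forall>b\<in>B. \<not>(j \<le> b \<and> b < p)) \<longrightarrow> xs ! (j - 1) < xs ! (p - 1))"

definition lc :: "nat \<Rightarrow> nat set \<Rightarrow> nat set \<Rightarrow> nat list \<Rightarrow> bool" where
  "lc n A B xs \<longleftrightarrow> (\<forall>p\<in>insert n A. cnd xs B p)"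

lemma cnd_empty: "cnd xs {} p = pm xs p"
  unfolding cnd_def pm_def by simp

lemma cnd_left:
  assumes "p \<le> b" "length ys = b"
  shows "cnd (ys @ zs) (insert b B1) p \<longleftrightarrow> cnd ys B1 p"
proof -
  have e: "\<And>j. 1 \<le> j \<Longrightarrow> j < p \<Longrightarrow> (ys @ zs) ! (j - 1) = ys ! (j - 1) \<and> (ys @ zs) ! (p - 1) = ys ! (p - 1)"
  proof -
    fix j assume "1 \<le> j" "j < p"
    hence "j - 1 < length ys" "p - 1 < length ys" using assms by arith+
    thus "(ys @ zs) ! (j - 1) = ys ! (j - 1) \<and> (ys @ zs) ! (p - 1) = ys ! (p - 1)" by (simp add: nth_append_left)
  qed
  have bl: "\<And>j. (\<forall>c\<in>insert b B1. \<not>(j \<le> c \<and> c < p)) \<longleftrightarrow> (\<forall>c\<in>B1. \<not>(j \<le> c \<and> c < p))"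
    using assms(1) by auto
  show ?thesis unfolding cnd_def bl
  proof (intro iffI allI impI)
    fix j assume a: "\<forall>j. 1 \<le> j \<and> j < p \<and> (\<forall>c\<in>B1. \<not> (j \<le> c \<and> c < p)) \<longrightarrow> (ys @ zs) ! (j - 1) < (ys @ zs) ! (p - 1)"
      and j: "1 \<le> j \<and> j < p \<and> (\<forall>c\<in>B1. \<not> (j \<le> c \<and> c < p))"
    from a j have "(ys @ zs) ! (j - 1) < (ys @ zs) ! (p - 1)" by blast
    moreover have "1 \<le> j" "j < p" using j by auto
    note ee = e[OF this]
    ultimately show "ys ! (j - 1) < ys ! (p - 1)" using ee by simp
  next
    fix j assume a: "\<forall>j. 1 \<le> j \<and> j < p \<and> (\<forall>c\<in>B1. \<not> (j \<le> c \<and> c < p)) \<longrightarrow> ys ! (j - 1) < ys ! (p - 1)"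
      and j: "1 \<le> j \<and> j < p \<and> (\<forall>c\<in>B1. \<not> (j \<le> c \<and> c < p))"
    from a j have "ys ! (j - 1) < ys ! (p - 1)" by blast
    moreover have "1 \<le> j" "j < p" using j by auto
    note ee = e[OF this]
    ultimately show "(ys @ zs) ! (j - 1) < (ys @ zs) ! (p - 1)" using ee by simp
  qed
qed

lemma cnd_right:
  assumes "1 \<le> q" "length ys = b" "b \<in> B" "B \<subseteq> {1..b}"
  shows "cnd (ys @ zs) B (b + q) \<longleftrightarrow> pm zs q"
proof
  assume c: "cnd (ys @ zs) B (b + q)"
  show "pm zs q" unfolding pm_def
  proof (intro allI impI)
    fix i assume i: "1 \<le> i \<and> i < q"
    have "\<forall>c\<in>B. \<not>(b + i \<le> c \<and> c < b + q)" using assms(4) i by auto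
    hence "(ys @ zs) ! (b + i - 1) < (ys @ zs) ! (b + q - 1)" using c i unfolding cnd_def by auto
    moreover have "b + i - 1 = length ys + (i - 1)" "b + q - 1 = length ys + (q - 1)" using i assms by arith+
    ultimately show "zs ! (i - 1) < zs ! (q - 1)" by (simp only: nth_append_length_plus)
  qed
next
  assume c: "pm zs q"
  show "cnd (ys @ zs) B (b + q)" unfolding cnd_def
  proof (intro allI impI)
    fix j assume j: "1 \<le> j \<and> j < b + q \<and> (\<forall>c\<in>B. \<not> (j \<le> c \<and> c < b + q))"
    have "b < j"
    proof (rule ccontr)
      assume "\<not> b < j"
      hence "j \<le> b \<and> b < b + q" using assms(1) by simp
      thus False using j assms(3) by blast
    qed
    define i where "i = j - b"
    have i: "j = b + i" "1 \<le> i" using \<open>b < j\<close> unfolding i_def by arith+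
    have "i < q" using j i by simp
    hence "zs ! (i - 1) < zs ! (q - 1)" using c i unfolding pm_def by auto
    moreover have "b + i - 1 = length ys + (i - 1)" "b + q - 1 = length ys + (q - 1)" using i assms by arith+
    ultimately show "(ys @ zs) ! (j - 1) < (ys @ zs) ! (b + q - 1)" unfolding i(1) by (simp only: nth_append_length_plus)
  qed
qed

definition comb :: "nat \<Rightarrow> nat set \<Rightarrow> nat set \<Rightarrow> nat set" where
  "comb b A1 A2 = A1 \<union> insert b ((+) b ` A2)"

lemma lc_split:
  assumes "A1 \<subseteq> {1..<b}" "B1 \<subseteq> {1..<b}" "1 \<le> b" "length ys = b" "length zs = m" "1 \<le> m" "A2 \<subseteq> {1..<m}"
  shows "lc (b + m) (comb b A1 A2) (insert b B1) (ys @ zs) \<longleftrightarrow> lc b A1 B1 ys \<and> (\<forall>q\<in>insert m A2. pm zs q)"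
proof -
  have e: "insert (b + m) (comb b A1 A2) = insert b A1 \<union> (+) b ` insert m A2" unfolding comb_def by (simp add: insert_commute)
  have L: "(\<forall>p\<in>insert b A1. cnd (ys @ zs) (insert b B1) p) \<longleftrightarrow> (\<forall>p\<in>insert b A1. cnd ys B1 p)"
  proof -
    have "\<And>p. p \<in> insert b A1 \<Longrightarrow> p \<le> b" using assms(1) by auto
    thus ?thesis using cnd_left[OF _ assms(4), of _ zs B1] by (simp add: Ball_def)
  qed
  have R: "(\<forall>p\<in>(+) b ` insert m A2. cnd (ys @ zs) (insert b B1) p) \<longleftrightarrow> (\<forall>q\<in>insert m A2. pm zs q)"
  proof -
    have "\<And>q. q \<in> insert m A2 \<Longrightarrow> 1 \<le> q" using assms(6,7) by auto
    moreover have "insert b B1 \<subseteq> {1..b}" using assms(2,3) by auto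
    ultimately have "\<And>q. q \<in> insert m A2 \<Longrightarrow> cnd (ys @ zs) (insert b B1) (b + q) \<longleftrightarrow> pm zs q"
      using cnd_right[OF _ assms(4), of _ "insert b B1" zs] by simp
    moreover have "(\<forall>p\<in>(+) b ` insert m A2. cnd (ys @ zs) (insert b B1) p) = (\<forall>q\<in>insert m A2. cnd (ys @ zs) (insert b B1) (b + q))"
      by blast
    ultimately show ?thesis by simp
  qed
  show ?thesis unfolding lc_def e ball_Un using L R by (simp only: ball_simps)
qed

lemma perms_split_eq:
  assumes "finite V" "b \<le> card V" "\<And>ys zs. length ys = b \<Longrightarrow> length zs = card V - b \<Longrightarrow> R (ys @ zs) = (P ys \<and> Q zs)"
  shows "{xs \<in> permutations_of_set V. R xs} =
    (\<Union>U\<in>{U. U \<subseteq> V \<and> card U = b}. (\<lambda>(ys, zs). ys @ zs) ` ({ys \<in> permutations_of_set U. P ys} \<times> {zs \<in> permutations_of_set (V - U). Q zs}))"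
proof (rule set_eqI, rule iffI)
  fix xs assume "xs \<in> {xs \<in> permutations_of_set V. R xs}"
  hence xs: "set xs = V" "distinct xs" "R xs" by (auto simp: permutations_of_set_def)
  have lx: "length xs = card V" using xs distinct_card by metis
  let ?U = "set (take b xs)"
  have lt: "length (take b xs) = b" using lx assms(2) by simp
  have dt: "distinct (take b xs)" "distinct (drop b xs)" using xs(2) by auto
  have cU: "card ?U = b" using dt lt distinct_card by metis
  have UV: "?U \<subseteq> V" using xs(1) set_take_subset by metis
  have disj: "set (take b xs) \<inter> set (drop b xs) = {}" using xs(2) by (metis append_take_drop_id distinct_append)
  have un: "set (take b xs) \<union> set (drop b xs) = V" using xs(1) by (metis append_take_drop_id set_append)
  have sd: "set (drop b xs) = V - ?U" using disj un by blast
  have "length (drop b xs) = card V - b" using lx by simp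
  hence PQ: "P (take b xs) \<and> Q (drop b xs)" using assms(3)[OF lt, of "drop b xs"] xs(3) by simp
  have "(take b xs, drop b xs) \<in> {ys \<in> permutations_of_set ?U. P ys} \<times> {zs \<in> permutations_of_set (V - ?U). Q zs}"
    using PQ dt sd by (auto simp: permutations_of_set_def)
  hence "xs \<in> (\<lambda>(ys, zs). ys @ zs) ` ({ys \<in> permutations_of_set ?U. P ys} \<times> {zs \<in> permutations_of_set (V - ?U). Q zs})"
    by (metis (no_types, lifting) append_take_drop_id case_prod_conv image_eqI)
  thus "xs \<in> (\<Union>U\<in>{U. U \<subseteq> V \<and> card U = b}. (\<lambda>(ys, zs). ys @ zs) ` ({ys \<in> permutations_of_set U. P ys} \<times> {zs \<in> permutations_of_set (V - U). Q zs}))"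
    using cU UV by blast
next
  fix xs assume "xs \<in> (\<Union>U\<in>{U. U \<subseteq> V \<and> card U = b}. (\<lambda>(ys, zs). ys @ zs) ` ({ys \<in> permutations_of_set U. P ys} \<times> {zs \<in> permutations_of_set (V - U). Q zs}))"
  then obtain U ys zs where U: "U \<subseteq> V" "card U = b" and xs: "xs = ys @ zs"
    and ys: "set ys = U" "distinct ys" "P ys" and zs: "set zs = V - U" "distinct zs" "Q zs"
    by (auto simp: permutations_of_set_def)
  have "length ys = b" using ys U distinct_card by metis
  moreover have "length zs = card V - b" using zs U assms(1) distinct_card by (metis card_Diff_subset finite_subset)
  ultimately have "R xs" using assms(3) xs ys zs by simp
  moreover have "set xs = V" using xs ys zs U by auto
  moreover have "distinct xs" using xs ys zs by auto
  ultimately show "xs \<in> {xs \<in> permutations_of_set V. R xs}" by (auto simp: permutations_of_set_def)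
qed

lemma card_perms_split:
  assumes "finite V" "b \<le> card V" "\<And>ys zs. length ys = b \<Longrightarrow> length zs = card V - b \<Longrightarrow> R (ys @ zs) = (P ys \<and> Q zs)"
  shows "card {xs \<in> permutations_of_set V. R xs} =
    (\<Sum>U\<in>{U. U \<subseteq> V \<and> card U = b}. card {ys \<in> permutations_of_set U. P ys} * card {zs \<in> permutations_of_set (V - U). Q zs})"
proof -
  let ?S = "\<lambda>U. {ys \<in> permutations_of_set U. P ys} \<times> {zs \<in> permutations_of_set (V - U). Q zs}"
  have fin: "finite {U. U \<subseteq> V \<and> card U = b}" using assms(1) by simp
  have "card {xs \<in> permutations_of_set V. R xs} = card (\<Union>U\<in>{U. U \<subseteq> V \<and> card U = b}. (\<lambda>(ys, zs). ys @ zs) ` ?S U)"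
    using perms_split_eq[where R=R and P=P and Q=Q, OF assms] by simp
  also have "\<dots> = (\<Sum>U\<in>{U. U \<subseteq> V \<and> card U = b}. card ((\<lambda>(ys, zs). ys @ zs) ` ?S U))"
  proof (rule card_UN_disjoint[OF fin])
    show "\<forall>U\<in>{U. U \<subseteq> V \<and> card U = b}. finite ((\<lambda>(ys, zs). ys @ zs) ` ?S U)" by auto
    show "\<forall>U\<in>{U. U \<subseteq> V \<and> card U = b}. \<forall>U'\<in>{U. U \<subseteq> V \<and> card U = b}. U \<noteq> U' \<longrightarrow>
      (\<lambda>(ys, zs). ys @ zs) ` ?S U \<inter> (\<lambda>(ys, zs). ys @ zs) ` ?S U' = {}"
    proof (intro ballI impI)
      fix U U' assume U: "U \<in> {U. U \<subseteq> V \<and> card U = b}" and U': "U' \<in> {U. U \<subseteq> V \<and> card U = b}" and ne: "U \<noteq> U'"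
      show "(\<lambda>(ys, zs). ys @ zs) ` ?S U \<inter> (\<lambda>(ys, zs). ys @ zs) ` ?S U' = {}"
      proof (rule ccontr)
        assume "\<not> ?thesis"
        then obtain ys zs ys' zs' where e: "ys @ zs = ys' @ zs'" and ys: "ys \<in> permutations_of_set U" and ys': "ys' \<in> permutations_of_set U'"
          by auto
        have "length ys = card U" "length ys' = card U'" using ys ys' length_finite_permutations_of_set by blast+
        hence "length ys = b" "length ys' = b" using U U' by auto
        hence "ys = ys'" using e by (metis append_eq_append_conv)
        hence "U = U'" using ys ys' by (auto simp: permutations_of_set_def)
        thus False using ne by simp
      qed
    qed
  qed
  also have "\<dots> = (\<Sum>U\<in>{U. U \<subseteq> V \<and> card U = b}. card {ys \<in> permutations_of_set U. P ys} * card {zs \<in> permutations_of_set (V - U). Q zs})"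
  proof (rule sum.cong[OF refl])
    fix U assume U: "U \<in> {U. U \<subseteq> V \<and> card U = b}"
    have "inj_on (\<lambda>(ys, zs). ys @ zs) (?S U)"
    proof (rule inj_onI)
      fix p1 p2 assume p1: "p1 \<in> ?S U" and p2: "p2 \<in> ?S U" and e: "(\<lambda>(ys, zs). ys @ zs) p1 = (\<lambda>(ys, zs). ys @ zs) p2"
      obtain a1 b1 a2 b2 where pp: "p1 = (a1, b1)" "p2 = (a2, b2)" by fastforce
      have "a1 \<in> permutations_of_set U" "a2 \<in> permutations_of_set U" using p1 p2 pp by auto
      hence "length a1 = card U" "length a2 = card U" using length_finite_permutations_of_set by blast+
      hence "length a1 = b" "length a2 = b" using U by auto
      thus "p1 = p2" using e pp by simp
    qed
    hence "card ((\<lambda>(ys, zs). ys @ zs) ` ?S U) = card (?S U)" by (rule card_image)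
    also have "\<dots> = card {ys \<in> permutations_of_set U. P ys} * card {zs \<in> permutations_of_set (V - U). Q zs}"
      by (rule card_cartesian_product)
    finally show "card ((\<lambda>(ys, zs). ys @ zs) ` ?S U) = card {ys \<in> permutations_of_set U. P ys} * card {zs \<in> permutations_of_set (V - U). Q zs}" .
  qed
  finally show ?thesis .
qed

definition lo :: "nat \<Rightarrow> nat set \<Rightarrow> nat set" where "lo b A = {a \<in> A. a < b}"
definition hi :: "nat \<Rightarrow> nat set \<Rightarrow> nat set" where "hi b A = {q. 1 \<le> q \<and> b + q \<in> A}"

lemma mem_shift: "x = b + (q::nat) \<Longrightarrow> (x \<in> (+) b ` S) = (q \<in> S)"
proof
  assume "x = b + q" "x \<in> (+) b ` S"
  then obtain r where "r \<in> S" "b + q = b + r" by auto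
  thus "q \<in> S" by simp
qed auto

lemma comb_lo: "A1 \<subseteq> {1..<b} \<Longrightarrow> lo b (comb b A1 A2) = A1"
  unfolding lo_def comb_def by auto

lemma comb_hi: "A2 \<subseteq> {1..<m} \<Longrightarrow> A1 \<subseteq> {1..<b} \<Longrightarrow> hi b (comb b A1 A2) = A2"
  unfolding hi_def comb_def by auto

lemma comb_lohi: "b \<in> A \<Longrightarrow> 1 \<le> b \<Longrightarrow> A \<subseteq> {1..<b+m} \<Longrightarrow> comb b (lo b A) (hi b A) = A"
proof -
  assume a: "b \<in> A" "1 \<le> b" "A \<subseteq> {1..<b+m}"
  show ?thesis unfolding comb_def lo_def hi_def
  proof (rule set_eqI)
    fix x
    show "x \<in> {a \<in> A. a < b} \<union> insert b ((+) b ` {q. 1 \<le> q \<and> b + q \<in> A}) \<longleftrightarrow> x \<in> A"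
    proof (cases "b < x")
      case True
      hence xq: "x = b + (x - b)" "1 \<le> x - b" by auto
      note ms = mem_shift[OF xq(1)]
      show ?thesis unfolding Un_iff insert_iff ms using True xq by auto
    next
      case False
      then show ?thesis using a by auto
    qed
  qed
qed

lemma uni_comb:
  assumes A1: "A1 \<subseteq> {1..<b}" and A2: "A2 \<subseteq> {1..<m}" and b: "1 \<le> b"
  shows "uni (comb b A1 A2) G \<longleftrightarrow> uni A1 (lo b G) \<and> uni A2 (hi b G)"
proof
  let ?A = "comb b A1 A2"
  assume u: "uni ?A G"
  show "uni A1 (lo b G) \<and> uni A2 (hi b G)"
  proof
    show "uni A1 (lo b G)" unfolding uni_def
    proof (intro ballI allI impI)
      fix x y assume x: "x \<in> lo b G - A1" and y: "1 \<le> y \<and> y < x \<and> (\<forall>a\<in>A1. \<not> (y \<le> a \<and> a < x))"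
      have xb: "x < b" "x \<in> G" using x unfolding lo_def by auto
      have "x \<notin> ?A" using x xb A1 unfolding comb_def lo_def by auto
      moreover have "\<forall>a\<in>?A. \<not> (y \<le> a \<and> a < x)" using y xb unfolding comb_def by auto
      ultimately have "y \<in> G" using u y xb unfolding uni_def by blast
      thus "y \<in> lo b G" using y xb unfolding lo_def by auto
    qed
    show "uni A2 (hi b G)" unfolding uni_def
    proof (intro ballI allI impI)
      fix x y assume x: "x \<in> hi b G - A2" and y: "1 \<le> y \<and> y < x \<and> (\<forall>a\<in>A2. \<not> (y \<le> a \<and> a < x))"
      have xb: "b + x \<in> G" "1 \<le> x" "x \<notin> A2" using x unfolding hi_def by auto
      have "b + x \<notin> ?A" using xb A1 unfolding comb_def by auto
      moreover have "\<forall>a\<in>?A. \<not> (b + y \<le> a \<and> a < b + x)"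
      proof
        fix a assume "a \<in> ?A"
        then consider "a \<in> A1" | "a = b" | q where "q \<in> A2" "a = b + q" unfolding comb_def by auto
        then show "\<not> (b + y \<le> a \<and> a < b + x)"
        proof cases
          case 1 then show ?thesis using A1 y by auto
        next
          case 2 then show ?thesis using y by auto
        next
          case 3 then show ?thesis using y by auto
        qed
      qed
      moreover have "1 \<le> b + y \<and> b + y < b + x" using y by auto
      ultimately have "b + y \<in> G" using u xb unfolding uni_def by blast
      thus "y \<in> hi b G" using y unfolding hi_def by auto
    qed
  qed
next
  let ?A = "comb b A1 A2"
  assume u: "uni A1 (lo b G) \<and> uni A2 (hi b G)"
  show "uni ?A G" unfolding uni_def
  proof (intro ballI allI impI)
    fix x y assume x: "x \<in> G - ?A" and y: "1 \<le> y \<and> y < x \<and> (\<forall>a\<in>?A. \<not> (y \<le> a \<and> a < x))"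
    have "x \<noteq> b" using x unfolding comb_def by auto
    then consider "x < b" | "b < x" by linarith
    then show "y \<in> G"
    proof cases
      case 1
      have "x \<in> lo b G - A1" using x 1 unfolding lo_def comb_def by auto
      moreover have "\<forall>a\<in>A1. \<not> (y \<le> a \<and> a < x)" using y unfolding comb_def by auto
      ultimately have "y \<in> lo b G" using u y unfolding uni_def by blast
      thus ?thesis unfolding lo_def by auto
    next
      case 2
      define q where "q = x - b"
      have xq: "x = b + q" "1 \<le> q" using 2 unfolding q_def by auto
      have "q \<notin> A2" using x xq unfolding comb_def by auto
      hence qG: "q \<in> hi b G - A2" using x xq unfolding hi_def by auto
      have "b \<in> ?A" unfolding comb_def by auto
      hence "b < y" using y 2 by (meson linorder_not_less)
      define r where "r = y - b"
      have yr: "y = b + r" "1 \<le> r" "r < q" using \<open>b < y\<close> y xq unfolding r_def by auto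
      have "\<forall>a\<in>A2. \<not> (r \<le> a \<and> a < q)"
      proof
        fix a assume "a \<in> A2"
        hence "b + a \<in> ?A" unfolding comb_def by auto
        thus "\<not> (r \<le> a \<and> a < q)" using y yr xq by auto
      qed
      hence "r \<in> hi b G" using u qG yr unfolding uni_def by blast
      thus ?thesis using yr unfolding hi_def by auto
    qed
  qed
qed

lemma card_comb:
  assumes A1: "A1 \<subseteq> {1..<b}" and A2: "A2 \<subseteq> {1..<m}" and b: "1 \<le> b" and G: "G \<subseteq> {1..<b+m}"
  shows "card (G - comb b A1 A2) = card (lo b G - A1) + card (hi b G - A2)"
proof -
  have e: "G - comb b A1 A2 = (lo b G - A1) \<union> (+) b ` (hi b G - A2)"
  proof (rule set_eqI)
    fix x show "x \<in> G - comb b A1 A2 \<longleftrightarrow> x \<in> (lo b G - A1) \<union> (+) b ` (hi b G - A2)"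
    proof (cases "b < x")
      case True
      hence xq: "x = b + (x - b)" "1 \<le> x - b" by auto
      note ms = mem_shift[OF xq(1)]
      show ?thesis unfolding lo_def hi_def comb_def Un_iff insert_iff ms Diff_iff using True xq A1 by auto
    next
      case False
      thus ?thesis using A1 unfolding lo_def hi_def comb_def by auto
    qed
  qed
  have "hi b G \<subseteq> {..<m}" using G unfolding hi_def by auto
  hence f2: "finite (hi b G)" using finite_subset by blast
  have "lo b G \<subseteq> {..<b}" unfolding lo_def by auto
  hence f1: "finite (lo b G)" using finite_subset by blast
  have fin: "finite (lo b G - A1)" "finite ((+) b ` (hi b G - A2))" using f1 f2 by auto
  have "card (G - comb b A1 A2) = card (lo b G - A1) + card ((+) b ` (hi b G - A2))"
    unfolding e by (rule card_Un_disjoint[OF fin]) (auto simp: lo_def)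
  also have "card ((+) b ` (hi b G - A2)) = card (hi b G - A2)" by (rule card_image) auto
  finally show ?thesis .
qed

definition CS :: "nat \<Rightarrow> nat set \<Rightarrow> nat set \<Rightarrow> nat set \<Rightarrow> int" where
  "CS n B G V = (\<Sum>A \<in> {A. B \<subseteq> A \<and> A \<subseteq> {1..<n} \<and> uni A G}.
      int (card {xs \<in> permutations_of_set V. lc n A B xs}) * (-1)^card(G - A))"

lemma count_single:
  assumes "finite V" "card V = n" "1 \<le> n" "A \<subseteq> {1..<n}"
  shows "card {xs \<in> permutations_of_set V. lc n A {} xs} = Wt n A"
proof -
  have "{xs \<in> permutations_of_set V. lc n A {} xs} = {xs \<in> permutations_of_set V. \<forall>p\<in>insert n A. pm xs p}"
    unfolding lc_def cnd_empty by simp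
  moreover have "insert n A \<subseteq> {1..n}" using assms by auto
  ultimately have "card {xs \<in> permutations_of_set V. lc n A {} xs} = \<Prod>({1..n} - insert n A)"
    using count_pm[rule_format, OF assms(1,2), of "insert n A"] by simp
  moreover have "{1..n} - insert n A = {1..<n} - A" by auto
  ultimately show ?thesis unfolding Wt_def by simp
qed

lemma CS_empty:
  assumes "finite V" "card V = n" "G \<subseteq> {1..<n}"
  shows "CS n {} G V = (if G \<subseteq> {} then int (fact n) else 0)"
proof (cases "n = 0")
  case True
  hence V: "V = {}" "G = {}" using assms by auto
  have I: "{A. {} \<subseteq> A \<and> A \<subseteq> {1..<n} \<and> uni A G} = {{}}" using True V by (auto simp: uni_def)
  have "lc n {} {} []" unfolding lc_def cnd_def using True by simp
  hence "{xs \<in> permutations_of_set V. lc n {} {} xs} = {[]}" using V by auto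
  thus ?thesis unfolding CS_def I using V True by simp
next
  case False
  hence n1: "1 \<le> n" by simp
  have "CS n {} G V = FF n G" unfolding CS_def FF_def
    by (rule sum.cong) (use count_single[OF assms(1,2) n1] in auto)
  thus ?thesis using FF_main[OF n1] assms(3) by auto
qed

lemma CS_split:
  assumes V: "finite V" "card V = b + m" and b: "1 \<le> b" and m: "1 \<le> m"
    and B1: "B1 \<subseteq> {1..<b}" and G: "G \<subseteq> {1..<b+m}"
    and IH: "\<And>U. U \<subseteq> V \<Longrightarrow> card U = b \<Longrightarrow> CS b B1 (lo b G) U = (if lo b G \<subseteq> B1 then int (fact b) else 0)"
  shows "CS (b + m) (insert b B1) G V = (if G \<subseteq> insert b B1 then int (fact (b + m)) else 0)"
proof -
  define A1s where "A1s = {A1. B1 \<subseteq> A1 \<and> A1 \<subseteq> {1..<b} \<and> uni A1 (lo b G)}"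
  define A2s where "A2s = {A2. A2 \<subseteq> {1..<m} \<and> uni A2 (hi b G)}"
  define Us where "Us = {U. U \<subseteq> V \<and> card U = b}"
  define c where "c = (\<lambda>U A1. card {ys \<in> permutations_of_set U. lc b A1 B1 ys})"
  define g1 where "g1 = (\<lambda>U A1. int (c U A1) * (-1::int)^card (lo b G - A1))"
  define g2 where "g2 = (\<lambda>A2. int (Wt m A2) * (-1::int)^card (hi b G - A2))"
  define f where "f = (\<lambda>A. int (card {xs \<in> permutations_of_set V. lc (b + m) A (insert b B1) xs}) * (-1::int)^card(G - A))"
  have finA1: "finite A1s" unfolding A1s_def by (rule finite_subset[of _ "Pow {1..<b}"]) auto
  have finA2: "finite A2s" unfolding A2s_def by (rule finite_subset[of _ "Pow {1..<m}"]) auto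
  have finU: "finite Us" unfolding Us_def using V by simp
  have I: "{A. insert b B1 \<subseteq> A \<and> A \<subseteq> {1..<b+m} \<and> uni A G} = (\<lambda>(A1, A2). comb b A1 A2) ` (A1s \<times> A2s)"
  proof (rule set_eqI, rule iffI)
    fix A assume "A \<in> {A. insert b B1 \<subseteq> A \<and> A \<subseteq> {1..<b+m} \<and> uni A G}"
    hence A: "insert b B1 \<subseteq> A" "A \<subseteq> {1..<b+m}" "uni A G" by auto
    have e: "comb b (lo b A) (hi b A) = A" using comb_lohi[of b A m] A b by auto
    have l: "lo b A \<subseteq> {1..<b}" using A unfolding lo_def by auto
    have h: "hi b A \<subseteq> {1..<m}" using A unfolding hi_def by auto
    have "uni (lo b A) (lo b G) \<and> uni (hi b A) (hi b G)" using uni_comb[OF l h b, of G] e A by simp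
    moreover have "B1 \<subseteq> lo b A" using A B1 unfolding lo_def by auto
    ultimately have "(lo b A, hi b A) \<in> A1s \<times> A2s" unfolding A1s_def A2s_def using l h by auto
    thus "A \<in> (\<lambda>(A1, A2). comb b A1 A2) ` (A1s \<times> A2s)" using e by force
  next
    fix A assume "A \<in> (\<lambda>(A1, A2). comb b A1 A2) ` (A1s \<times> A2s)"
    then obtain A1 A2 where A: "A = comb b A1 A2" "A1 \<in> A1s" "A2 \<in> A2s" by auto
    hence a: "B1 \<subseteq> A1" "A1 \<subseteq> {1..<b}" "uni A1 (lo b G)" "A2 \<subseteq> {1..<m}" "uni A2 (hi b G)"
      unfolding A1s_def A2s_def by auto
    have "uni A G" using uni_comb[OF a(2) a(4) b, of G] a A by simp
    moreover have "insert b B1 \<subseteq> A" using a A unfolding comb_def by auto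
    moreover have "A \<subseteq> {1..<b+m}" using a A b m unfolding comb_def by auto
    ultimately show "A \<in> {A. insert b B1 \<subseteq> A \<and> A \<subseteq> {1..<b+m} \<and> uni A G}" by auto
  qed
  have inj: "inj_on (\<lambda>(A1, A2). comb b A1 A2) (A1s \<times> A2s)"
  proof (rule inj_onI)
    fix p q assume p: "p \<in> A1s \<times> A2s" and q: "q \<in> A1s \<times> A2s" and e: "(\<lambda>(A1, A2). comb b A1 A2) p = (\<lambda>(A1, A2). comb b A1 A2) q"
    obtain p1 p2 q1 q2 where pq: "p = (p1, p2)" "q = (q1, q2)" by fastforce
    have s: "p1 \<subseteq> {1..<b}" "p2 \<subseteq> {1..<m}" "q1 \<subseteq> {1..<b}" "q2 \<subseteq> {1..<m}"
      using p q pq unfolding A1s_def A2s_def by auto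
    have "comb b p1 p2 = comb b q1 q2" using e pq by simp
    hence "p1 = q1 \<and> p2 = q2" using comb_lo[OF s(1)] comb_lo[OF s(3)] comb_hi[OF s(2) s(1)] comb_hi[OF s(4) s(3)] by metis
    thus "p = q" using pq by simp
  qed
  have fA: "\<And>A1 A2. A1 \<in> A1s \<Longrightarrow> A2 \<in> A2s \<Longrightarrow> f (comb b A1 A2) = (\<Sum>U\<in>Us. g1 U A1 * g2 A2)"
  proof -
    fix A1 A2 assume a1: "A1 \<in> A1s" and a2: "A2 \<in> A2s"
    hence a: "B1 \<subseteq> A1" "A1 \<subseteq> {1..<b}" "A2 \<subseteq> {1..<m}" unfolding A1s_def A2s_def by auto
    have cnt: "card {xs \<in> permutations_of_set V. lc (b + m) (comb b A1 A2) (insert b B1) xs}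
       = (\<Sum>U\<in>Us. c U A1 * card {zs \<in> permutations_of_set (V - U). \<forall>q\<in>insert m A2. pm zs q})"
      unfolding Us_def c_def
    proof (rule card_perms_split)
      show "finite V" by (rule V(1))
      show "b \<le> card V" using V by simp
      fix ys zs :: "nat list" assume "length ys = b" "length zs = card V - b"
      thus "lc (b + m) (comb b A1 A2) (insert b B1) (ys @ zs) = (lc b A1 B1 ys \<and> (\<forall>q\<in>insert m A2. pm zs q))"
        using lc_split[OF a(2) B1 b _ _ m a(3)] V by simp
    qed
    have cz: "\<And>U. U \<in> Us \<Longrightarrow> card {zs \<in> permutations_of_set (V - U). \<forall>q\<in>insert m A2. pm zs q} = Wt m A2"
    proof -
      fix U assume "U \<in> Us"
      hence U: "U \<subseteq> V" "card U = b" unfolding Us_def by auto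
      have "card (V - U) = m" using U V by (simp add: card_Diff_subset finite_subset)
      moreover have "insert m A2 \<subseteq> {1..m}" using a m by auto
      ultimately have "card {zs \<in> permutations_of_set (V - U). \<forall>q\<in>insert m A2. pm zs q} = \<Prod>({1..m} - insert m A2)"
        using count_pm[rule_format, of "V - U" m "insert m A2"] V by simp
      moreover have "{1..m} - insert m A2 = {1..<m} - A2" by auto
      ultimately show "card {zs \<in> permutations_of_set (V - U). \<forall>q\<in>insert m A2. pm zs q} = Wt m A2"
        unfolding Wt_def by simp
    qed
    have sg: "card (G - comb b A1 A2) = card (lo b G - A1) + card (hi b G - A2)"
      by (rule card_comb[OF a(2) a(3) b G])
    have "f (comb b A1 A2) = int (\<Sum>U\<in>Us. c U A1 * Wt m A2) * ((-1)^card (lo b G - A1) * (-1)^card (hi b G - A2))"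
      unfolding f_def cnt sg power_add using cz by simp
    also have "\<dots> = (\<Sum>U\<in>Us. g1 U A1 * g2 A2)"
      unfolding g1_def g2_def of_nat_sum sum_distrib_right by (rule sum.cong) (simp_all add: algebra_simps)
    finally show "f (comb b A1 A2) = (\<Sum>U\<in>Us. g1 U A1 * g2 A2)" .
  qed
  have "CS (b + m) (insert b B1) G V = sum f ((\<lambda>(A1, A2). comb b A1 A2) ` (A1s \<times> A2s))"
    unfolding CS_def f_def I by simp
  also have "\<dots> = (\<Sum>p\<in>A1s \<times> A2s. f (comb b (fst p) (snd p)))"
    by (subst sum.reindex[OF inj]) (simp add: case_prod_beta)
  also have "\<dots> = (\<Sum>A1\<in>A1s. \<Sum>A2\<in>A2s. f (comb b A1 A2))"
    by (simp add: sum.cartesian_product case_prod_beta)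
  also have "\<dots> = (\<Sum>A1\<in>A1s. \<Sum>A2\<in>A2s. \<Sum>U\<in>Us. g1 U A1 * g2 A2)"
    using fA by simp
  also have "\<dots> = (\<Sum>U\<in>Us. \<Sum>A1\<in>A1s. \<Sum>A2\<in>A2s. g1 U A1 * g2 A2)"
    by (simp add: sum.swap[where B=Us])
  also have "\<dots> = (\<Sum>U\<in>Us. (\<Sum>A1\<in>A1s. g1 U A1) * (\<Sum>A2\<in>A2s. g2 A2))"
    by (simp add: sum_product)
  also have "\<dots> = (\<Sum>U\<in>Us. (if lo b G \<subseteq> B1 then int (fact b) else 0) * FF m (hi b G))"
  proof (rule sum.cong[OF refl])
    fix U assume "U \<in> Us"
    hence U: "U \<subseteq> V" "card U = b" unfolding Us_def by auto
    have "(\<Sum>A1\<in>A1s. g1 U A1) = CS b B1 (lo b G) U" unfolding CS_def g1_def c_def A1s_def by simp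
    moreover have "(\<Sum>A2\<in>A2s. g2 A2) = FF m (hi b G)" unfolding FF_def g2_def A2s_def by simp
    ultimately show "(\<Sum>A1\<in>A1s. g1 U A1) * (\<Sum>A2\<in>A2s. g2 A2) = (if lo b G \<subseteq> B1 then int (fact b) else 0) * FF m (hi b G)"
      using IH[OF U] by simp
  qed
  also have "\<dots> = int (card Us) * ((if lo b G \<subseteq> B1 then int (fact b) else 0) * (if hi b G = {} then int (fact m) else 0))"
  proof -
    have "hi b G \<subseteq> {1..<m}" using G unfolding hi_def by auto
    hence "FF m (hi b G) = (if hi b G = {} then int (fact m) else 0)" using FF_main[OF m] by blast
    thus ?thesis by simp
  qed
  also have "\<dots> = (if G \<subseteq> insert b B1 then int (fact (b + m)) else 0)"
  proof -
    have cu: "card Us = (b + m) choose b" unfolding Us_def using n_subsets[OF V(1), of b] V by simp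
    have fb: "fact b * fact m * ((b + m) choose b) = (fact (b + m) :: nat)"
      using binomial_fact_lemma[of b "b + m"] by simp
    have iff: "G \<subseteq> insert b B1 \<longleftrightarrow> lo b G \<subseteq> B1 \<and> hi b G = {}"
    proof
      assume a: "G \<subseteq> insert b B1"
      have "lo b G \<subseteq> B1" using a unfolding lo_def by auto
      moreover have "hi b G = {}"
      proof (rule ccontr)
        assume "hi b G \<noteq> {}"
        then obtain x where x: "1 \<le> x" "b + x \<in> G" unfolding hi_def by auto
        hence "b + x \<in> B1" using a by auto
        thus False using B1 by auto
      qed
      ultimately show "lo b G \<subseteq> B1 \<and> hi b G = {}" by simp
    next
      assume a: "lo b G \<subseteq> B1 \<and> hi b G = {}"
      show "G \<subseteq> insert b B1"
      proof
        fix g assume g: "g \<in> G"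
        consider "g < b" | "g = b" | "b < g" by linarith
        then show "g \<in> insert b B1"
        proof cases
          case 1 then show ?thesis using a g unfolding lo_def by auto
        next
          case 2 then show ?thesis by simp
        next
          case 3
          hence "g - b \<in> hi b G" using g unfolding hi_def by auto
          then show ?thesis using a by auto
        qed
      qed
    qed
    show ?thesis
    proof (cases "G \<subseteq> insert b B1")
      case True
      hence "lo b G \<subseteq> B1" "hi b G = {}" using iff by auto
      moreover have "int (card Us) * (int (fact b) * int (fact m)) = int (fact (b + m))"
        using fb cu by (metis mult.commute of_nat_mult)
      ultimately show ?thesis using True by simp
    next
      case False
      then show ?thesis using iff by auto
    qed
  qed
  finally show ?thesis .
qed

lemma core:
  "finite V \<Longrightarrow> card V = n \<Longrightarrow> B \<subseteq> {1..<n} \<Longrightarrow> G \<subseteq> {1..<n} \<Longrightarrow>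
   CS n B G V = (if G \<subseteq> B then int (fact n) else 0)"
proof (induction n arbitrary: B G V rule: less_induct)
  case (less n)
  show ?case
  proof (cases "B = {}")
    case True
    then show ?thesis using CS_empty[OF less.prems(1,2,4)] by simp
  next
    case False
    define b where "b = Max B"
    have finB: "finite B" using less.prems(3) finite_subset by blast
    have bB: "b \<in> B" unfolding b_def using finB False by simp
    have b1: "1 \<le> b" "b < n" using bB less.prems(3) by auto
    define m where "m = n - b"
    have nbm: "n = b + m" "1 \<le> m" using b1 unfolding m_def by auto
    define B1 where "B1 = B - {b}"
    have BB: "B = insert b B1" using bB unfolding B1_def by auto
    have B1s: "B1 \<subseteq> {1..<b}"
    proof
      fix x assume "x \<in> B1"
      hence "x \<in> B" "x \<noteq> b" unfolding B1_def by auto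
      moreover have "x \<le> b" unfolding b_def using \<open>x \<in> B\<close> finB by simp
      ultimately show "x \<in> {1..<b}" using less.prems(3) by auto
    qed
    have IH: "\<And>U. U \<subseteq> V \<Longrightarrow> card U = b \<Longrightarrow> CS b B1 (lo b G) U = (if lo b G \<subseteq> B1 then int (fact b) else 0)"
    proof -
      fix U assume U: "U \<subseteq> V" "card U = b"
      have "finite U" using U less.prems(1) finite_subset by blast
      moreover have "lo b G \<subseteq> {1..<b}" using less.prems(4) unfolding lo_def by auto
      ultimately show "CS b B1 (lo b G) U = (if lo b G \<subseteq> B1 then int (fact b) else 0)"
        using less.IH[OF b1(2) _ U(2) B1s] by blast
    qed
    have "CS (b + m) (insert b B1) G V = (if G \<subseteq> insert b B1 then int (fact (b + m)) else 0)"
      by (rule CS_split[OF less.prems(1) _ b1(1) nbm(2) B1s _ IH])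
         (use less.prems nbm in auto)
    thus ?thesis using nbm BB by simp
  qed
qed

abbreviation ps :: "nat list \<Rightarrow> nat \<Rightarrow> nat" where "ps \<alpha> i \<equiv> sum_list (take i \<alpha>)"

lemma ps_Suc: "i < length \<alpha> \<Longrightarrow> ps \<alpha> (Suc i) = ps \<alpha> i + \<alpha> ! i"
  by (simp add: take_Suc_conv_app_nth)

lemma ps_mono_strict:
  assumes "is_comp n \<alpha>" "i < j" "j \<le> length \<alpha>"
  shows "ps \<alpha> i < ps \<alpha> j"
  using assms(2,3)
proof (induction j)
  case 0 then show ?case by simp
next
  case (Suc j)
  have pos: "0 < \<alpha> ! j" using assms(1) Suc.prems unfolding is_comp_def by auto
  have e: "ps \<alpha> (Suc j) = ps \<alpha> j + \<alpha> ! j" using Suc.prems by (simp add: ps_Suc)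
  show ?case
  proof (cases "i = j")
    case True then show ?thesis using e pos by simp
  next
    case False
    hence "ps \<alpha> i < ps \<alpha> j" using Suc by simp
    then show ?thesis using e by simp
  qed
qed

lemma ps_less_iff:
  assumes "is_comp n \<alpha>" "i \<le> length \<alpha>" "j \<le> length \<alpha>"
  shows "ps \<alpha> i < ps \<alpha> j \<longleftrightarrow> i < j"
  using ps_mono_strict[OF assms(1)] assms(2,3)
  by (metis less_asym linorder_neqE_nat)

lemma ps_le_iff:
  assumes "is_comp n \<alpha>" "i \<le> length \<alpha>" "j \<le> length \<alpha>"
  shows "ps \<alpha> i \<le> ps \<alpha> j \<longleftrightarrow> i \<le> j"
  using ps_less_iff[OF assms(1) assms(3) assms(2)] by linarith

lemma ps_len: "is_comp n \<alpha> \<Longrightarrow> ps \<alpha> (length \<alpha>) = n"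
  unfolding is_comp_def by simp

lemma ps_0: "ps \<alpha> 0 = 0" by simp

lemma comp_len_pos: "is_comp n \<alpha> \<Longrightarrow> 1 \<le> n \<Longrightarrow> 1 \<le> length \<alpha>"
  unfolding is_comp_def by (cases \<alpha>) auto

lemma ps_locate:
  assumes "is_comp n \<alpha>" "1 \<le> p" "p \<le> n"
  shows "\<exists>i. 1 \<le> i \<and> i \<le> length \<alpha> \<and> ps \<alpha> (i - 1) < p \<and> p \<le> ps \<alpha> i"
proof -
  define i where "i = (LEAST i. p \<le> ps \<alpha> i)"
  have ex: "p \<le> ps \<alpha> (length \<alpha>)" using ps_len[OF assms(1)] assms by simp
  have pi: "p \<le> ps \<alpha> i" unfolding i_def by (rule LeastI[of _ "length \<alpha>"]) (rule ex)
  have il: "i \<le> length \<alpha>" unfolding i_def by (rule Least_le) (rule ex)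
  have i0: "i \<noteq> 0" using pi assms(2) by (cases i) auto
  have "\<not> p \<le> ps \<alpha> (i - 1)" unfolding i_def
    by (rule not_less_Least) (use i0 i_def in simp)
  thus ?thesis using pi il i0 by (intro exI[of _ i]) auto
qed

lemma Sset_alt: "Sset \<alpha> = ps \<alpha> ` {1..<length \<alpha>}"
  unfolding Sset_def by auto

lemma Sset_sub:
  assumes "is_comp n \<alpha>" shows "Sset \<alpha> \<subseteq> {1..<n}"
proof
  fix x assume "x \<in> Sset \<alpha>"
  then obtain i where i: "1 \<le> i" "i < length \<alpha>" "x = ps \<alpha> i" unfolding Sset_alt by auto
  have "ps \<alpha> 0 < ps \<alpha> i" using ps_mono_strict[OF assms, of 0 i] i by simp
  moreover have "ps \<alpha> i < ps \<alpha> (length \<alpha>)" using ps_mono_strict[OF assms, of i "length \<alpha>"] i by simp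
  ultimately show "x \<in> {1..<n}" using i ps_len[OF assms] by auto
qed

lemma Sset_snoc: "Sset (xs @ [c]) = (if xs = [] then {} else insert (sum_list xs) (Sset xs))"
proof (cases "xs = []")
  case True then show ?thesis unfolding Sset_def by simp
next
  case False
  have "Sset (xs @ [c]) = (\<lambda>i. ps (xs @ [c]) i) ` {1..<Suc (length xs)}" unfolding Sset_alt by simp
  also have "\<dots> = ps xs ` {1..length xs}"
    by (rule image_cong) auto
  also have "{1..length xs} = insert (length xs) {1..<length xs}" using False by (cases xs) auto
  finally show ?thesis using False unfolding Sset_alt by simp
qed

lemma comp_zero: "is_comp 0 \<alpha> \<Longrightarrow> \<alpha> = []"
  unfolding is_comp_def by (cases \<alpha>) auto

lemma comp_snoc: "is_comp n (xs @ [c]) \<longleftrightarrow> 0 < c \<and> is_comp (n - c) xs \<and> c \<le> n"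
  unfolding is_comp_def by auto

lemma Sset_inj:
  "is_comp n \<alpha> \<Longrightarrow> is_comp n \<alpha>' \<Longrightarrow> Sset \<alpha> = Sset \<alpha>' \<Longrightarrow> \<alpha> = \<alpha>'"
proof (induction \<alpha> arbitrary: n \<alpha>' rule: rev_induct)
  case Nil
  hence "n = 0" unfolding is_comp_def by simp
  then show ?case using comp_zero[of \<alpha>'] Nil by simp
next
  case (snoc c xs)
  have c: "0 < c" "is_comp (n - c) xs" "c \<le> n" using snoc.prems(1) comp_snoc by auto
  have "\<alpha>' \<noteq> []" using snoc.prems(1,2) c unfolding is_comp_def by auto
  then obtain ys d where a': "\<alpha>' = ys @ [d]" by (metis rev_exhaust)
  have d: "0 < d" "is_comp (n - d) ys" "d \<le> n" using snoc.prems(2) a' comp_snoc by auto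
  have sx: "sum_list xs = n - c" "sum_list ys = n - d" using c d unfolding is_comp_def by auto
  show ?case
  proof (cases "xs = []")
    case True
    hence "Sset \<alpha>' = {}" using snoc.prems(3) Sset_snoc[of xs c] by simp
    hence "ys = []" using a' Sset_snoc[of ys d] by (cases "ys = []") auto
    then show ?thesis using True sx a' c d by simp
  next
    case False
    hence "Sset \<alpha>' \<noteq> {}" using snoc.prems(3) Sset_snoc[of xs c] by (metis insert_not_empty)
    hence ysne: "ys \<noteq> []" using a' Sset_snoc[of ys d] by auto
    have M: "\<And>zs e m. is_comp m zs \<Longrightarrow> zs \<noteq> [] \<Longrightarrow> Max (Sset (zs @ [e])) = sum_list zs"
    proof -
      fix zs e m assume z: "is_comp m zs" "zs \<noteq> []"
      have "Sset zs \<subseteq> {1..<m}" "sum_list zs = m" using Sset_sub[OF z(1)] z(1) unfolding is_comp_def by auto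
      moreover have "finite (Sset zs)" using Sset_sub[OF z(1)] finite_subset by blast
      ultimately show "Max (Sset (zs @ [e])) = sum_list zs" unfolding Sset_snoc using z(2)
        by (intro Max_eqI) auto
    qed
    have "sum_list xs = sum_list ys" using M[OF c(2) False] M[OF d(2) ysne] snoc.prems(3) a' by metis
    hence cd: "c = d" "n - c = n - d" using sx c d by auto
    have nin: "\<And>zs m. is_comp m zs \<Longrightarrow> sum_list zs \<notin> Sset zs"
      using Sset_sub unfolding is_comp_def by fastforce
    have "Sset xs = Sset (xs @ [c]) - {sum_list xs}" using Sset_snoc[of xs c] False nin[OF c(2)] by auto
    also have "\<dots> = Sset (ys @ [d]) - {sum_list ys}" using snoc.prems(3) a' \<open>sum_list xs = sum_list ys\<close> by simp
    also have "\<dots> = Sset ys" using Sset_snoc[of ys d] ysne nin[OF d(2)] by auto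
    finally have "xs = ys" using snoc.IH[OF c(2)] d(2) cd by simp
    then show ?thesis using a' cd by simp
  qed
qed

lemma Sset_surj:
  "A \<subseteq> {1..<n} \<Longrightarrow> \<exists>\<alpha>. is_comp n \<alpha> \<and> Sset \<alpha> = A"
proof (induction n arbitrary: A rule: less_induct)
  case (less n)
  show ?case
  proof (cases "A = {}")
    case True
    show ?thesis
    proof (cases "n = 0")
      case True
      then show ?thesis using \<open>A = {}\<close> by (intro exI[of _ "[]"]) (simp add: is_comp_def Sset_def)
    next
      case False
      then show ?thesis using \<open>A = {}\<close> by (intro exI[of _ "[n]"]) (simp add: is_comp_def Sset_def)
    qed
  next
    case False
    define a where "a = Max A"
    have fA: "finite A" using less.prems finite_subset by blast
    have aA: "a \<in> A" using fA False unfolding a_def by simp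
    have a1: "1 \<le> a" "a < n" using aA less.prems by auto
    have "A - {a} \<subseteq> {1..<a}"
    proof
      fix x assume "x \<in> A - {a}"
      moreover hence "x \<le> a" unfolding a_def using fA by simp
      ultimately show "x \<in> {1..<a}" using less.prems by fastforce
    qed
    then obtain \<alpha>0 where a0: "is_comp a \<alpha>0" "Sset \<alpha>0 = A - {a}" using less.IH[OF a1(2)] by blast
    have ne: "\<alpha>0 \<noteq> []" using a0 a1 unfolding is_comp_def by auto
    have "is_comp n (\<alpha>0 @ [n - a])" using a0 a1 unfolding is_comp_def by auto
    moreover have "Sset (\<alpha>0 @ [n - a]) = A" using Sset_snoc[of \<alpha>0 "n - a"] ne a0 aA
      unfolding is_comp_def by auto
    ultimately show ?thesis by blast
  qed
qed

lemma block_alt: "block \<alpha> i = {ps \<alpha> (i - 1) + 1 .. ps \<alpha> i}"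
  unfolding block_def by simp

lemma unimodal_uni:
  assumes c: "is_comp n \<alpha>" and G: "G \<subseteq> {1..<n}"
  shows "unimodal \<alpha> G \<longleftrightarrow> uni (Sset \<alpha>) G"
proof
  assume u: "unimodal \<alpha> G"
  show "uni (Sset \<alpha>) G" unfolding uni_def
  proof (intro ballI allI impI)
    fix x y assume x: "x \<in> G - Sset \<alpha>" and y: "1 \<le> y \<and> y < x \<and> (\<forall>a\<in>Sset \<alpha>. \<not> (y \<le> a \<and> a < x))"
    have x1: "1 \<le> x" "x \<le> n" using x G by auto
    obtain i where i: "1 \<le> i" "i \<le> length \<alpha>" "ps \<alpha> (i - 1) < x" "x \<le> ps \<alpha> i"
      using ps_locate[OF c x1] by blast
    have "ps \<alpha> (i - 1) < y"
    proof (cases "i - 1 = 0")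
      case True then show ?thesis using y by simp
    next
      case False
      hence "i - 1 \<in> {1..<length \<alpha>}" using i by auto
      hence "ps \<alpha> (i - 1) \<in> Sset \<alpha>" unfolding Sset_alt by (rule imageI)
      then show ?thesis using y i(3) by force
    qed
    hence yb: "y \<in> block \<alpha> i - Sset \<alpha>" unfolding block_alt using y i by auto
    have xb: "x \<in> G \<inter> (block \<alpha> i - Sset \<alpha>)" unfolding block_alt using x i by auto
    show "y \<in> G" using u i xb yb y unfolding unimodal_def by auto
  qed
next
  assume u: "uni (Sset \<alpha>) G"
  show "unimodal \<alpha> G" unfolding unimodal_def
  proof (intro ballI impI)
    fix i x y assume i: "i \<in> {1..length \<alpha>}" and x: "x \<in> G \<inter> (block \<alpha> i - Sset \<alpha>)"
      and y: "y \<in> block \<alpha> i - Sset \<alpha>" and yx: "y < x"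
    have yb: "ps \<alpha> (i - 1) < y" "x \<le> ps \<alpha> i" using x y unfolding block_alt by auto
    have "\<forall>a\<in>Sset \<alpha>. \<not> (y \<le> a \<and> a < x)"
    proof (intro ballI notI)
      fix a assume a: "a \<in> Sset \<alpha>" "y \<le> a \<and> a < x"
      then obtain k where k: "1 \<le> k" "k < length \<alpha>" "a = ps \<alpha> k" unfolding Sset_alt by auto
      have "ps \<alpha> (i - 1) < ps \<alpha> k" "ps \<alpha> k < ps \<alpha> i" using a k yb by auto
      hence "i - 1 < k" "k < i" using ps_less_iff[OF c] i k by auto
      thus False by simp
    qed
    moreover have "1 \<le> y" using yb by simp
    ultimately show "y \<in> G" using u x yx unfolding uni_def by blast
  qed
qed

definition cnds :: "nat \<Rightarrow> nat set \<Rightarrow> nat set \<Rightarrow> (nat \<Rightarrow> nat) \<Rightarrow> bool" where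
  "cnds n A B \<sigma> \<longleftrightarrow> (\<forall>p\<in>insert n A. \<forall>j. 1 \<le> j \<and> j < p \<and> (\<forall>b\<in>B. \<not>(j \<le> b \<and> b < p)) \<longrightarrow> \<sigma> j < \<sigma> p)"

lemma ins_Sset:
  assumes "is_comp n \<alpha>" "1 \<le> n"
  shows "insert n (Sset \<alpha>) = ps \<alpha> ` {1..length \<alpha>}"
proof -
  have l: "1 \<le> length \<alpha>" using comp_len_pos[OF assms] .
  have "{1..length \<alpha>} = insert (length \<alpha>) {1..<length \<alpha>}" using l by auto
  thus ?thesis unfolding Sset_alt using ps_len[OF assms(1)] by simp
qed

lemma block_sub_iff:
  assumes "is_comp n \<alpha>" "1 \<le> i" "i \<le> length \<alpha>"
  shows "block \<alpha> i \<subseteq> block \<beta> k \<longleftrightarrow> ps \<beta> (k - 1) \<le> ps \<alpha> (i - 1) \<and> ps \<alpha> i \<le> ps \<beta> k"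
proof -
  have "ps \<alpha> (i - 1) < ps \<alpha> i" using ps_mono_strict[OF assms(1), of "i - 1" i] assms by simp
  thus ?thesis unfolding block_alt by (subst atLeastatMost_subset_iff) auto
qed

lemma Max_block:
  assumes c: "is_comp n \<alpha>" and i: "1 \<le> i" "i \<le> length \<alpha>"
    and H: "\<And>j. j \<in> block \<alpha> i \<Longrightarrow> j \<noteq> ps \<alpha> i \<Longrightarrow> \<sigma> j < \<sigma> (ps \<alpha> i)"
  shows "Max (\<sigma> ` block \<alpha> i) = \<sigma> (ps \<alpha> i)"
proof (rule Max_eqI)
  show "finite (\<sigma> ` block \<alpha> i)" unfolding block_alt by simp
  have "ps \<alpha> (i - 1) < ps \<alpha> i" using ps_mono_strict[OF c, of "i - 1" i] i by simp
  thus "\<sigma> (ps \<alpha> i) \<in> \<sigma> ` block \<alpha> i" unfolding block_alt by auto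
  fix y assume "y \<in> \<sigma> ` block \<alpha> i"
  then obtain j where "j \<in> block \<alpha> i" "y = \<sigma> j" by auto
  thus "y \<le> \<sigma> (ps \<alpha> i)" using H by (cases "j = ps \<alpha> i") (auto intro: less_imp_le)
qed

lemma CONS_alt:
  assumes a: "is_comp n \<alpha>" and b: "is_comp n \<beta>" and le: "comp_le \<alpha> \<beta>" and n1: "1 \<le> n"
  shows "CONS n \<alpha> \<beta> = {\<sigma>. \<sigma> permutes {1..n} \<and> cnds n (Sset \<alpha>) (Sset \<beta>) \<sigma>}"
proof (rule set_eqI, rule iffI)
  fix \<sigma> assume "\<sigma> \<in> CONS n \<alpha> \<beta>"
  hence perm: "\<sigma> permutes {1..n}"
    and C1: "\<forall>i\<in>{1..length \<alpha>}. \<sigma> (ps \<alpha> i) = Max (\<sigma> ` block \<alpha> i)"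
    and C2: "\<forall>k\<in>{1..length \<beta>}. \<forall>r\<in>{1..length \<alpha>}. \<forall>r'\<in>{1..length \<alpha>}.
        r < r' \<and> block \<alpha> r \<subseteq> block \<beta> k \<and> block \<alpha> r' \<subseteq> block \<beta> k \<longrightarrow>
        Max (\<sigma> ` block \<alpha> r) < Max (\<sigma> ` block \<alpha> r')"
    unfolding CONS_def by auto
  have inj: "inj \<sigma>" using perm permutes_inj by blast
  have BA: "Sset \<beta> \<subseteq> Sset \<alpha>" using le unfolding comp_le_def .
  have "cnds n (Sset \<alpha>) (Sset \<beta>) \<sigma>" unfolding cnds_def
  proof (intro ballI allI impI)
    fix p j assume p: "p \<in> insert n (Sset \<alpha>)" and j: "1 \<le> j \<and> j < p \<and> (\<forall>b\<in>Sset \<beta>. \<not> (j \<le> b \<and> b < p))"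
    obtain i where i: "1 \<le> i" "i \<le> length \<alpha>" "p = ps \<alpha> i" using p ins_Sset[OF a n1] by auto
    have pn: "p \<le> n" using i ps_le_iff[OF a i(2), of "length \<alpha>"] ps_len[OF a] by simp
    obtain r where r: "1 \<le> r" "r \<le> length \<alpha>" "ps \<alpha> (r - 1) < j" "j \<le> ps \<alpha> r"
      using ps_locate[OF a, of j] j pn by auto
    have "r - 1 < i" using ps_less_iff[OF a, of "r - 1" i] r i j by simp
    hence ri: "r \<le> i" by simp
    have jb: "j \<in> block \<alpha> r" unfolding block_alt using r by auto
    have fb: "finite (\<sigma> ` block \<alpha> r)" unfolding block_alt by simp
    have sj: "\<sigma> j \<le> Max (\<sigma> ` block \<alpha> r)" using jb fb by simp
    show "\<sigma> j < \<sigma> p"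
    proof (cases "r = i")
      case True
      have "\<sigma> j \<le> \<sigma> p" using sj C1 True i r by auto
      moreover have "\<sigma> j \<noteq> \<sigma> p" using inj j by (metis injD less_irrefl)
      ultimately show ?thesis by simp
    next
      case False
      hence ri': "r < i" using ri by simp
      obtain k where k: "1 \<le> k" "k \<le> length \<beta>" "ps \<beta> (k - 1) < p" "p \<le> ps \<beta> k"
        using ps_locate[OF b, of p] j pn by auto
      have tk: "ps \<beta> (k - 1) \<le> ps \<alpha> (r - 1)"
      proof (cases "k - 1 = 0")
        case True then show ?thesis by simp
      next
        case False
        hence "k - 1 \<in> {1..<length \<beta>}" using k by auto
        hence "ps \<beta> (k - 1) \<in> Sset \<beta>" unfolding Sset_alt by (rule imageI)
        hence tB: "ps \<beta> (k - 1) \<in> Sset \<alpha>" using BA by auto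
        then obtain u where u: "1 \<le> u" "u < length \<alpha>" "ps \<beta> (k - 1) = ps \<alpha> u" unfolding Sset_alt by auto
        have "ps \<beta> (k - 1) < j" using j k(3) \<open>ps \<beta> (k - 1) \<in> Sset \<beta>\<close> by force
        hence "ps \<alpha> u < ps \<alpha> r" using u r by simp
        hence "u < r" using ps_less_iff[OF a, of u r] u r by simp
        hence "ps \<alpha> u \<le> ps \<alpha> (r - 1)" using ps_le_iff[OF a, of u "r - 1"] u r by simp
        then show ?thesis using u by simp
      qed
      have "ps \<alpha> r \<le> ps \<alpha> i" using ps_le_iff[OF a r(2) i(2)] ri by simp
      hence s1: "block \<alpha> r \<subseteq> block \<beta> k" using block_sub_iff[OF a r(1,2)] tk k i by simp
      have "ps \<alpha> (r - 1) \<le> ps \<alpha> (i - 1)" using ps_le_iff[OF a, of "r - 1" "i - 1"] ri r i by simp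
      hence s2: "block \<alpha> i \<subseteq> block \<beta> k" using block_sub_iff[OF a i(1,2)] tk k i by simp
      have "Max (\<sigma> ` block \<alpha> r) < Max (\<sigma> ` block \<alpha> i)" using C2 k r i ri' s1 s2 by auto
      moreover have "Max (\<sigma> ` block \<alpha> i) = \<sigma> p" using C1 i by auto
      ultimately show ?thesis using sj by simp
    qed
  qed
  thus "\<sigma> \<in> {\<sigma>. \<sigma> permutes {1..n} \<and> cnds n (Sset \<alpha>) (Sset \<beta>) \<sigma>}" using perm by simp
next
  fix \<sigma> assume "\<sigma> \<in> {\<sigma>. \<sigma> permutes {1..n} \<and> cnds n (Sset \<alpha>) (Sset \<beta>) \<sigma>}"
  hence perm: "\<sigma> permutes {1..n}" and cd: "cnds n (Sset \<alpha>) (Sset \<beta>) \<sigma>" by auto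
  have BA: "Sset \<beta> \<subseteq> Sset \<alpha>" using le unfolding comp_le_def .
  have M: "\<And>i. 1 \<le> i \<Longrightarrow> i \<le> length \<alpha> \<Longrightarrow> Max (\<sigma> ` block \<alpha> i) = \<sigma> (ps \<alpha> i)"
  proof (rule Max_block[OF a])
    fix i j assume i: "1 \<le> i" "i \<le> length \<alpha>" and jb: "j \<in> block \<alpha> i" and jne: "j \<noteq> ps \<alpha> i"
    have jr: "ps \<alpha> (i - 1) < j" "j < ps \<alpha> i" using jb jne unfolding block_alt by auto
    have pA: "ps \<alpha> i \<in> insert n (Sset \<alpha>)" using ins_Sset[OF a n1] i by auto
    have "\<forall>b\<in>Sset \<beta>. \<not> (j \<le> b \<and> b < ps \<alpha> i)"
    proof (intro ballI notI)
      fix c assume c: "c \<in> Sset \<beta>" "j \<le> c \<and> c < ps \<alpha> i"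
      have "c \<in> Sset \<alpha>" using BA c by auto
      then obtain u where u: "1 \<le> u" "u < length \<alpha>" "c = ps \<alpha> u" unfolding Sset_alt by auto
      have "ps \<alpha> (i - 1) < ps \<alpha> u" "ps \<alpha> u < ps \<alpha> i" using u c jr by auto
      hence "i - 1 < u" "u < i" using ps_less_iff[OF a] u i by auto
      thus False by simp
    qed
    moreover have "1 \<le> j" using jr by simp
    ultimately show "\<sigma> j < \<sigma> (ps \<alpha> i)" using cd pA jr unfolding cnds_def by blast
  qed
  have C1: "\<forall>i\<in>{1..length \<alpha>}. \<sigma> (ps \<alpha> i) = Max (\<sigma> ` block \<alpha> i)" using M by auto
  have C2: "\<forall>k\<in>{1..length \<beta>}. \<forall>r\<in>{1..length \<alpha>}. \<forall>r'\<in>{1..length \<alpha>}.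
        r < r' \<and> block \<alpha> r \<subseteq> block \<beta> k \<and> block \<alpha> r' \<subseteq> block \<beta> k \<longrightarrow>
        Max (\<sigma> ` block \<alpha> r) < Max (\<sigma> ` block \<alpha> r')"
  proof (intro ballI impI)
    fix k r r' assume k: "k \<in> {1..length \<beta>}" and r: "r \<in> {1..length \<alpha>}" and r': "r' \<in> {1..length \<alpha>}"
      and h: "r < r' \<and> block \<alpha> r \<subseteq> block \<beta> k \<and> block \<alpha> r' \<subseteq> block \<beta> k"
    have s1: "ps \<beta> (k - 1) \<le> ps \<alpha> (r - 1)" "ps \<alpha> r \<le> ps \<beta> k" using block_sub_iff[OF a, of r \<beta> k] r h by auto
    have s2: "ps \<alpha> r' \<le> ps \<beta> k" using block_sub_iff[OF a, of r' \<beta> k] r' h by auto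
    have lt: "ps \<alpha> r < ps \<alpha> r'" using ps_less_iff[OF a, of r r'] r r' h by auto
    have r0: "ps \<alpha> (r - 1) < ps \<alpha> r" using ps_less_iff[OF a, of "r - 1" r] r by auto
    have pA: "ps \<alpha> r' \<in> insert n (Sset \<alpha>)" using ins_Sset[OF a n1] r' by auto
    have "\<forall>c\<in>Sset \<beta>. \<not> (ps \<alpha> r \<le> c \<and> c < ps \<alpha> r')"
    proof (intro ballI notI)
      fix c assume c: "c \<in> Sset \<beta>" "ps \<alpha> r \<le> c \<and> c < ps \<alpha> r'"
      then obtain u where u: "1 \<le> u" "u < length \<beta>" "c = ps \<beta> u" unfolding Sset_alt by auto
      have "ps \<beta> (k - 1) < ps \<beta> u" "ps \<beta> u < ps \<beta> k" using s1 s2 r0 c u by auto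
      hence "k - 1 < u" "u < k" using ps_less_iff[OF b] u k by auto
      thus False by simp
    qed
    moreover have "1 \<le> ps \<alpha> r" using r0 by simp
    ultimately have "\<sigma> (ps \<alpha> r) < \<sigma> (ps \<alpha> r')" using cd pA lt unfolding cnds_def by blast
    thus "Max (\<sigma> ` block \<alpha> r) < Max (\<sigma> ` block \<alpha> r')" using M r r' by auto
  qed
  show "\<sigma> \<in> CONS n \<alpha> \<beta>" unfolding CONS_def using perm C1 C2 by blast
qed

lemma nth_L: "1 \<le> j \<Longrightarrow> j \<le> n \<Longrightarrow> map \<sigma> [1..<Suc n] ! (j - 1) = \<sigma> j"
proof -
  assume j: "1 \<le> j" "j \<le> n"
  hence l: "j - 1 < length [1..<Suc n]" by (simp del: upt_Suc)
  have "[1..<Suc n] ! (j - 1) = 1 + (j - 1)" using j by (intro nth_upt) simp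
  also have "\<dots> = j" using j by simp
  finally show ?thesis using l by (simp del: upt_Suc)
qed

lemma L_inj: "inj_on (\<lambda>\<sigma>. map \<sigma> [1..<Suc n]) {\<sigma>. \<sigma> permutes {1..n}}"
proof (rule inj_onI)
  fix \<sigma> \<tau> assume s: "\<sigma> \<in> {\<sigma>. \<sigma> permutes {1..n}}" and t: "\<tau> \<in> {\<sigma>. \<sigma> permutes {1..n}}"
    and e: "map \<sigma> [1..<Suc n] = map \<tau> [1..<Suc n]"
  show "\<sigma> = \<tau>"
  proof
    fix x show "\<sigma> x = \<tau> x"
    proof (cases "x \<in> {1..n}")
      case True
      have "map \<sigma> [1..<Suc n] ! (x - 1) = map \<tau> [1..<Suc n] ! (x - 1)" by (simp only: e)
      thus ?thesis using True nth_L[of x n \<sigma>] nth_L[of x n \<tau>] by simp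
    next
      case False
      have "\<sigma> permutes {1..n}" "\<tau> permutes {1..n}" using s t by auto
      thus ?thesis using False permutes_not_in by metis
    qed
  qed
qed

lemma L_image: "(\<lambda>\<sigma>. map \<sigma> [1..<Suc n]) ` {\<sigma>. \<sigma> permutes {1..n}} = permutations_of_set {1..n}"
proof (rule card_subset_eq)
  show "finite (permutations_of_set {1..n})" by simp
  show "(\<lambda>\<sigma>. map \<sigma> [1..<Suc n]) ` {\<sigma>. \<sigma> permutes {1..n}} \<subseteq> permutations_of_set {1..n}"
  proof
    fix xs assume "xs \<in> (\<lambda>\<sigma>. map \<sigma> [1..<Suc n]) ` {\<sigma>. \<sigma> permutes {1..n}}"
    then obtain \<sigma> where s: "\<sigma> permutes {1..n}" "xs = map \<sigma> [1..<Suc n]" by auto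
    have "set xs = \<sigma> ` {1..n}" using s by auto
    also have "\<dots> = {1..n}" using permutes_image[OF s(1)] .
    finally have "set xs = {1..n}" .
    moreover have "distinct xs" using s permutes_inj[OF s(1)] by (simp add: distinct_map inj_on_subset)
    ultimately show "xs \<in> permutations_of_set {1..n}" by (simp add: permutations_of_set_def)
  qed
  have "card ((\<lambda>\<sigma>. map \<sigma> [1..<Suc n]) ` {\<sigma>. \<sigma> permutes {1..n}}) = card {\<sigma>. \<sigma> permutes {1..n}}"
    by (rule card_image[OF L_inj])
  also have "\<dots> = fact n" by (rule card_permutations) auto
  finally show "card ((\<lambda>\<sigma>. map \<sigma> [1..<Suc n]) ` {\<sigma>. \<sigma> permutes {1..n}}) = card (permutations_of_set {1..n})"
    by simp
qed

lemma card_cnds: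
  assumes "A \<subseteq> {1..<n}"
  shows "card {\<sigma>. \<sigma> permutes {1..n} \<and> cnds n A B \<sigma>} = card {xs \<in> permutations_of_set {1..n}. lc n A B xs}"
proof -
  let ?L = "\<lambda>\<sigma>. map \<sigma> [1..<Suc n]"
  have eqv: "\<And>\<sigma>. lc n A B (?L \<sigma>) \<longleftrightarrow> cnds n A B \<sigma>"
  proof -
    fix \<sigma> :: "nat \<Rightarrow> nat"
    have "\<And>p j. p \<in> insert n A \<Longrightarrow> 1 \<le> j \<Longrightarrow> j < p \<Longrightarrow> ?L \<sigma> ! (j - 1) = \<sigma> j \<and> ?L \<sigma> ! (p - 1) = \<sigma> p"
    proof -
      fix p j assume "p \<in> insert n A" "1 \<le> j" "j < p"
      hence "p \<le> n" "1 \<le> p" using assms by auto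
      thus "?L \<sigma> ! (j - 1) = \<sigma> j \<and> ?L \<sigma> ! (p - 1) = \<sigma> p" using nth_L[of j n \<sigma>] nth_L[of p n \<sigma>] \<open>1 \<le> j\<close> \<open>j < p\<close> by simp
    qed
    thus "lc n A B (?L \<sigma>) \<longleftrightarrow> cnds n A B \<sigma>" unfolding lc_def cnd_def cnds_def
      by (metis (no_types, lifting))
  qed
  have "card {\<sigma>. \<sigma> permutes {1..n} \<and> cnds n A B \<sigma>} = card (?L ` {\<sigma>. \<sigma> permutes {1..n} \<and> cnds n A B \<sigma>})"
    by (rule card_image[symmetric], rule inj_on_subset[OF L_inj]) auto
  also have "?L ` {\<sigma>. \<sigma> permutes {1..n} \<and> cnds n A B \<sigma>} = {xs \<in> ?L ` {\<sigma>. \<sigma> permutes {1..n}}. lc n A B xs}"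
    using eqv by auto
  also have "\<dots> = {xs \<in> permutations_of_set {1..n}. lc n A B xs}" unfolding L_image ..
  finally show ?thesis .
qed

theorem theorem2p4:
  fixes n :: nat and \<beta> \<gamma> :: "nat list"
  assumes "is_comp n \<beta>" and "is_comp n \<gamma>"
  shows "(\<Sum>\<alpha> \<in> {\<alpha>. is_comp n \<alpha> \<and> comp_le \<alpha> \<beta> \<and> unimodal \<alpha> (Sset \<gamma>)}.
            int (card (CONS n \<alpha> \<beta>)) * (-1) ^ card (Sset \<gamma> - Sset \<alpha>))
         = (if comp_le \<beta> \<gamma> then int (fact n) else 0)"
proof (cases "n = 0")
  case True
  have b: "\<beta> = []" "\<gamma> = []" using comp_zero assms True by auto
  have I: "{\<alpha>. is_comp n \<alpha> \<and> comp_le \<alpha> \<beta> \<and> unimodal \<alpha> (Sset \<gamma>)} = {[]}"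
    using comp_zero True b by (auto simp: is_comp_def comp_le_def unimodal_def)
  have "CONS n [] [] = {\<sigma>. \<sigma> permutes {}}" unfolding CONS_def using True by simp
  also have "\<dots> = {id}" by (auto simp: permutes_empty)
  finally have "card (CONS n [] []) = 1" by simp
  then show ?thesis unfolding I using b True by (simp add: comp_le_def)
next
  case False
  hence n1: "1 \<le> n" by simp
  define B where "B = Sset \<beta>"
  define G where "G = Sset \<gamma>"
  have Bs: "B \<subseteq> {1..<n}" "G \<subseteq> {1..<n}" unfolding B_def G_def using Sset_sub assms by auto
  define \<A> where "\<A> = {\<alpha>. is_comp n \<alpha> \<and> comp_le \<alpha> \<beta> \<and> unimodal \<alpha> (Sset \<gamma>)}"
  define F where "F = (\<lambda>A. int (card {xs \<in> permutations_of_set {1..n}. lc n A B xs}) * (-1) ^ card (G - A))"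
  have eq: "\<And>\<alpha>. \<alpha> \<in> \<A> \<Longrightarrow> int (card (CONS n \<alpha> \<beta>)) * (-1) ^ card (Sset \<gamma> - Sset \<alpha>) = F (Sset \<alpha>)"
  proof -
    fix \<alpha> assume "\<alpha> \<in> \<A>"
    hence a: "is_comp n \<alpha>" "comp_le \<alpha> \<beta>" unfolding \<A>_def by auto
    have "card (CONS n \<alpha> \<beta>) = card {xs \<in> permutations_of_set {1..n}. lc n (Sset \<alpha>) B xs}"
      unfolding CONS_alt[OF a(1) assms(1) a(2) n1] B_def by (rule card_cnds[OF Sset_sub[OF a(1)]])
    thus "int (card (CONS n \<alpha> \<beta>)) * (-1) ^ card (Sset \<gamma> - Sset \<alpha>) = F (Sset \<alpha>)"
      unfolding F_def G_def by simp
  qed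
  have inj: "inj_on Sset \<A>" unfolding \<A>_def by (rule inj_onI) (use Sset_inj in blast)
  have img: "Sset ` \<A> = {A. B \<subseteq> A \<and> A \<subseteq> {1..<n} \<and> uni A G}"
  proof (rule set_eqI, rule iffI)
    fix A assume "A \<in> Sset ` \<A>"
    then obtain \<alpha> where a: "A = Sset \<alpha>" "is_comp n \<alpha>" "comp_le \<alpha> \<beta>" "unimodal \<alpha> (Sset \<gamma>)" unfolding \<A>_def by auto
    show "A \<in> {A. B \<subseteq> A \<and> A \<subseteq> {1..<n} \<and> uni A G}"
      using a Sset_sub[OF a(2)] unimodal_uni[OF a(2) Bs(2)] unfolding B_def G_def comp_le_def by auto
  next
    fix A assume "A \<in> {A. B \<subseteq> A \<and> A \<subseteq> {1..<n} \<and> uni A G}"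
    hence A: "B \<subseteq> A" "A \<subseteq> {1..<n}" "uni A G" by auto
    obtain \<alpha> where a: "is_comp n \<alpha>" "Sset \<alpha> = A" using Sset_surj[OF A(2)] by blast
    have "comp_le \<alpha> \<beta>" using A a unfolding comp_le_def B_def by simp
    moreover have "unimodal \<alpha> (Sset \<gamma>)" using unimodal_uni[OF a(1) Bs(2)] A a unfolding G_def by simp
    ultimately show "A \<in> Sset ` \<A>" using a unfolding \<A>_def by blast
  qed
  have "(\<Sum>\<alpha> \<in> \<A>. int (card (CONS n \<alpha> \<beta>)) * (-1) ^ card (Sset \<gamma> - Sset \<alpha>)) = (\<Sum>\<alpha> \<in> \<A>. F (Sset \<alpha>))"
    using eq by (rule sum.cong[OF refl])
  also have "\<dots> = sum F (Sset ` \<A>)" using sum.reindex[OF inj, of F] by (simp add: comp_def)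
  also have "\<dots> = CS n B G {1..n}" unfolding img CS_def F_def ..
  also have "\<dots> = (if G \<subseteq> B then int (fact n) else 0)" by (rule core) (use Bs in auto)
  finally show ?thesis unfolding \<A>_def B_def G_def comp_le_def by simp
qed

end
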